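(* Assume that (H1)-(H2) hold and $\widetilde{\mathcal{L}}$ is compact. For all $g_0\in E^2(p,w)$ such that $\mathbb{E}_p[g_0e_1w]\neq 0$, we have $$\lim_{n\rightarrow\infty}\frac{\mathrm{Var}_p\left[I\widetilde{\mathcal{L}}^ng_0\right]}{\mathbb{E}_p\left[\left|\widetilde{\mathcal{L}}^ng_0\right|^2 w\right]}=C(p,w).$$
   Context: Let $-\infty\le a<b\le\infty$, let $p$ be a probability density on $]a,b[$ with $p>0$ a.e., and $w\in L^1_{\text{loc}}(]a,b[)$ a weight with $w>0$ a.e. and $pw\in L^1_{\text{loc}}(]a,b[)$. Let $P(x)=\int_a^x p$, $\bar P=1-P$, $K(x,y)=P(x\wedge y)\bar P(x\vee y)$. $H^1(p,w)$ is the set of weakly differentiable $h\in L^2(p)$ with $h'\in L^2(pw)$; $C(p,w)$ is the smallest $C$ with $\mathrm{Var}_p[h]\le C\,\mathbb{E}_p[|h'|^2w]$ for all $h\in H^1(p,w)$. Hypotheses: (H1) $C(p,w)<\infty$; (H2) $L^2(pw)\subset L^1_{\text{loc}}(]a,b[)$. $E^2(p,w)=\{f\in L^2(pw)\cap L^1_{\text{loc}}: x\mapsto\int_{x_0}^x f\in L^2(p)\}$ with the $L^2(pw)$ norm, and $If=\int_{x_0}^{\cdot}f-\mathbb{E}_p[\int_{x_0}^{\cdot}f]$. The operator $\widetilde{\mathcal{L}} f(x)=\frac{1}{p(x)w(x)}\int_a^b K(x,y)f(y)\,dy$ on $E^2(p,w)$, iterated as $\widetilde{\mathcal{L}}^{n+1}=\widetilde{\mathcal{L}}(\widetilde{\mathcal{L}}^n)$.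 When $\widetilde{\mathcal{L}}$ is compact, its eigenvalues $\kappa_1\ge\kappa_2\ge\dots>0$ tend to $0$ with $\kappa_1=C(p,w)$, and there is an orthonormal basis of $E^2(p,w)$ of eigenvectors $e_i$; $e_1$ is the (a.e. positive) eigenvector for $\kappa_1$. *)

theory Defs
  imports "HOL-Analysis.Analysis"
begin

definition Ivl :: "ereal \<Rightarrow> ereal \<Rightarrow> real set" where
  "Ivl a b = {x. a < ereal x \<and> ereal x < b}"

definition loc_int :: "ereal \<Rightarrow> ereal \<Rightarrow> (real \<Rightarrow> real) \<Rightarrow> bool" where
  "loc_int a b f \<longleftrightarrow> f \<in> borel_measurable lborel \<and>
     (\<forall>c d. a < ereal c \<and> ereal d < b \<longrightarrow> set_integrable lborel {c..d} f)"

definition prob_density :: "ereal \<Rightarrow> ereal \<Rightarrow> (real \<Rightarrow> real) \<Rightarrow> bool" where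
  "prob_density a b p \<longleftrightarrow> p \<in> borel_measurable lborel \<and> (\<forall>x\<in>Ivl a b. 0 \<le> p x) \<and>
     set_integrable lborel (Ivl a b) p \<and> (LINT x:Ivl a b|lborel. p x) = 1 \<and>
     (AE x in lborel. x \<in> Ivl a b \<longrightarrow> 0 < p x)"

definition weight :: "ereal \<Rightarrow> ereal \<Rightarrow> (real \<Rightarrow> real) \<Rightarrow> (real \<Rightarrow> real) \<Rightarrow> bool" where
  "weight a b p w \<longleftrightarrow> loc_int a b w \<and> (AE x in lborel. x \<in> Ivl a b \<longrightarrow> 0 < w x) \<and>
     loc_int a b (\<lambda>x. p x * w x)"

definition L2 :: "ereal \<Rightarrow> ereal \<Rightarrow> (real \<Rightarrow> real) \<Rightarrow> (real \<Rightarrow> real) \<Rightarrow> bool" where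
  "L2 a b q f \<longleftrightarrow> f \<in> borel_measurable lborel \<and>
     set_integrable lborel (Ivl a b) (\<lambda>x. (f x)\<^sup>2 * q x)"

definition Ep :: "ereal \<Rightarrow> ereal \<Rightarrow> (real \<Rightarrow> real) \<Rightarrow> (real \<Rightarrow> real) \<Rightarrow> real" where
  "Ep a b p f = (LINT x:Ivl a b|lborel. f x * p x)"

definition Varp :: "ereal \<Rightarrow> ereal \<Rightarrow> (real \<Rightarrow> real) \<Rightarrow> (real \<Rightarrow> real) \<Rightarrow> real" where
  "Varp a b p h = Ep a b p (\<lambda>x. (h x - Ep a b p h)\<^sup>2)"

text \<open>Test functions: C^infinity functions whose support has compact closure inside ]a,b[.
  The list of derivatives D is given explicitly: D 0 = phi, D (k+1) = (D k)'.\<close>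
definition test_fun :: "ereal \<Rightarrow> ereal \<Rightarrow> (nat \<Rightarrow> real \<Rightarrow> real) \<Rightarrow> bool" where
  "test_fun a b D \<longleftrightarrow> (\<forall>k x. (D k has_real_derivative D (Suc k) x) (at x)) \<and>
     compact (closure {x. D 0 x \<noteq> 0}) \<and> closure {x. D 0 x \<noteq> 0} \<subseteq> Ivl a b"

definition weak_deriv :: "ereal \<Rightarrow> ereal \<Rightarrow> (real \<Rightarrow> real) \<Rightarrow> (real \<Rightarrow> real) \<Rightarrow> bool" where
  "weak_deriv a b h h' \<longleftrightarrow> loc_int a b h \<and> loc_int a b h' \<and>
     (\<forall>D. test_fun a b D \<longrightarrow>
        (LINT x:Ivl a b|lborel. h x * D 1 x) = - (LINT x:Ivl a b|lborel. h' x * D 0 x))"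

definition in_H1 :: "ereal \<Rightarrow> ereal \<Rightarrow> (real \<Rightarrow> real) \<Rightarrow> (real \<Rightarrow> real)
    \<Rightarrow> (real \<Rightarrow> real) \<Rightarrow> (real \<Rightarrow> real) \<Rightarrow> bool" where
  "in_H1 a b p w h h' \<longleftrightarrow> L2 a b p h \<and> weak_deriv a b h h' \<and> L2 a b (\<lambda>x. p x * w x) h'"

definition poincare_consts :: "ereal \<Rightarrow> ereal \<Rightarrow> (real \<Rightarrow> real) \<Rightarrow> (real \<Rightarrow> real) \<Rightarrow> real set" where
  "poincare_consts a b p w = {C. 0 \<le> C \<and> (\<forall>h h'. in_H1 a b p w h h' \<longrightarrow>
       Varp a b p h \<le> C * Ep a b p (\<lambda>x. \<bar>h' x\<bar>\<^sup>2 * w x))}"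

definition Cpw :: "ereal \<Rightarrow> ereal \<Rightarrow> (real \<Rightarrow> real) \<Rightarrow> (real \<Rightarrow> real) \<Rightarrow> real" where
  "Cpw a b p w = Inf (poincare_consts a b p w)"

text \<open>(H1): C(p,w) < infinity.\<close>
definition H1 :: "ereal \<Rightarrow> ereal \<Rightarrow> (real \<Rightarrow> real) \<Rightarrow> (real \<Rightarrow> real) \<Rightarrow> bool" where
  "H1 a b p w \<longleftrightarrow> poincare_consts a b p w \<noteq> {}"

definition H2 :: "ereal \<Rightarrow> ereal \<Rightarrow> (real \<Rightarrow> real) \<Rightarrow> (real \<Rightarrow> real) \<Rightarrow> bool" where
  "H2 a b p w \<longleftrightarrow> (\<forall>f. L2 a b (\<lambda>x. p x * w x) f \<longrightarrow> loc_int a b f)"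

definition prim :: "real \<Rightarrow> (real \<Rightarrow> real) \<Rightarrow> real \<Rightarrow> real" where
  "prim x0 f x = (LBINT t=ereal x0..ereal x. f t)"

definition E2 :: "ereal \<Rightarrow> ereal \<Rightarrow> (real \<Rightarrow> real) \<Rightarrow> (real \<Rightarrow> real) \<Rightarrow> real \<Rightarrow> (real \<Rightarrow> real) set" where
  "E2 a b p w x0 = {f. L2 a b (\<lambda>x. p x * w x) f \<and> loc_int a b f \<and> L2 a b p (prim x0 f)}"

definition normsq_pw :: "ereal \<Rightarrow> ereal \<Rightarrow> (real \<Rightarrow> real) \<Rightarrow> (real \<Rightarrow> real) \<Rightarrow> (real \<Rightarrow> real) \<Rightarrow> real" where
  "normsq_pw a b p w f = (LINT x:Ivl a b|lborel. (f x)\<^sup>2 * (p x * w x))"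

definition Iop :: "ereal \<Rightarrow> ereal \<Rightarrow> (real \<Rightarrow> real) \<Rightarrow> real \<Rightarrow> (real \<Rightarrow> real) \<Rightarrow> real \<Rightarrow> real" where
  "Iop a b p x0 f x = prim x0 f x - Ep a b p (prim x0 f)"

definition cdf :: "ereal \<Rightarrow> ereal \<Rightarrow> (real \<Rightarrow> real) \<Rightarrow> real \<Rightarrow> real" where
  "cdf a b p x = (LINT t:{t\<in>Ivl a b. t \<le> x}|lborel. p t)"

definition Kker :: "ereal \<Rightarrow> ereal \<Rightarrow> (real \<Rightarrow> real) \<Rightarrow> real \<Rightarrow> real \<Rightarrow> real" where
  "Kker a b p x y = cdf a b p (min x y) * (1 - cdf a b p (max x y))"

definition Ltil :: "ereal \<Rightarrow> ereal \<Rightarrow> (real \<Rightarrow> real) \<Rightarrow> (real \<Rightarrow> real) \<Rightarrow> (real \<Rightarrow> real) \<Rightarrow> real \<Rightarrow> real" where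
  "Ltil a b p w f x = (LINT y:Ivl a b|lborel. Kker a b p x y * f y) / (p x * w x)"

text \<open>L tilde is a compact operator on E^2(p,w): it maps E^2(p,w) into itself, and the image
  of every norm-bounded sequence has a subsequence converging in E^2(p,w).\<close>
definition compact_Ltil :: "ereal \<Rightarrow> ereal \<Rightarrow> (real \<Rightarrow> real) \<Rightarrow> (real \<Rightarrow> real) \<Rightarrow> real \<Rightarrow> bool" where
  "compact_Ltil a b p w x0 \<longleftrightarrow>
     (\<forall>f\<in>E2 a b p w x0. Ltil a b p w f \<in> E2 a b p w x0) \<and>
     (\<forall>F :: nat \<Rightarrow> real \<Rightarrow> real. (\<forall>n. F n \<in> E2 a b p w x0) \<and>
        (\<exists>B. \<forall>n. normsq_pw a b p w (F n) \<le> B) \<longrightarrow>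
        (\<exists>r g. strict_mono r \<and> g \<in> E2 a b p w x0 \<and>
           (\<lambda>n. normsq_pw a b p w (\<lambda>x. Ltil a b p w (F (r n)) x - g x)) \<longlonglongrightarrow> 0))"

end

theory Submission
  imports Defs
begin

locale setting =
  fixes a b :: ereal and p w :: "real \<Rightarrow> real" and x0 :: real
  assumes ab: "a < b" and x0: "x0 \<in> Ivl a b" and dens: "prob_density a b p"
    and wt: "weight a b p w"
begin

abbreviation "S \<equiv> Ivl a b"
abbreviation "P \<equiv> cdf a b p"
abbreviation "K \<equiv> Kker a b p"

lemma S_open: "open S"
proof -
  have "Ivl a b = ereal -` {a<..<b}" by (auto simp: Ivl_def)
  moreover have "open (ereal -` {a<..<b})" by (intro open_vimage continuous_on_ereal continuous_on_id) auto
  ultimately show ?thesis by simp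
qed

lemma S_sets[measurable]: "S \<in> sets borel"
  using S_open by (rule borel_open)

lemma S_sets_lborel[measurable]: "S \<in> sets lborel" by simp

lemma p_meas[measurable]: "p \<in> borel_measurable borel"
  using dens by (simp add: prob_density_def)

lemma w_meas[measurable]: "w \<in> borel_measurable borel"
  using wt by (simp add: weight_def loc_int_def)

lemma p_nonneg: "x \<in> S \<Longrightarrow> 0 \<le> p x"
  using dens by (simp add: prob_density_def)

lemma p_int: "integrable lborel (\<lambda>x. indicator S x * p x)"
  using dens by (simp add: prob_density_def set_integrable_def)

lemma p_one: "integral\<^sup>L lborel (\<lambda>x. indicator S x * p x) = 1"
  using dens by (simp add: prob_density_def set_lebesgue_integral_def)

lemma AE_p_pos: "AE x in lborel. x \<in> S \<longrightarrow> 0 < p x"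
  using dens by (simp add: prob_density_def)

lemma AE_w_pos: "AE x in lborel. x \<in> S \<longrightarrow> 0 < w x"
  using wt by (simp add: weight_def)

lemma S_convex: assumes "x \<in> S" "z \<in> S" "x \<le> t" "t \<le> z" shows "t \<in> S"
proof -
  have 1: "ereal x \<le> ereal t" "ereal t \<le> ereal z" using assms by auto
  have "a < ereal x" "ereal z < b" using assms(1,2) by (auto simp: Ivl_def)
  then have "a < ereal t" "ereal t < b" using 1 by (metis less_le_trans, metis le_less_trans)
  then show ?thesis by (simp add: Ivl_def)
qed

lemma S_Icc: assumes "x \<in> S" "z \<in> S" shows "{x..z} \<subseteq> S"
proof
  fix t assume "t \<in> {x..z}" then show "t \<in> S" using S_convex[OF assms] by simp
qed

lemma pS_nonneg: "0 \<le> indicator S x * p x"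
  using p_nonneg by (simp add: indicator_def)

lemma P_eq: "P t = integral\<^sup>L lborel (\<lambda>x. indicator S x * p x * (if x \<le> t then 1 else 0))"
  unfolding cdf_def set_lebesgue_integral_def
  by (intro Bochner_Integration.integral_cong) (simp_all split: split_indicator)

lemma int_pS_bounded:
  assumes [measurable]: "h \<in> borel_measurable borel" and "\<And>x. \<bar>h x\<bar> \<le> 1"
  shows "integrable lborel (\<lambda>x. indicator S x * p x * h x)"
proof (rule Bochner_Integration.integrable_bound[OF p_int])
  show "AE x in lborel. norm (indicator S x * p x * h x) \<le> norm (indicator S x * p x)"
    using assms(2) pS_nonneg
    by (auto simp: abs_mult intro!: mult_left_le)
qed simp

lemma one_minus_P: "1 - P t = integral\<^sup>L lborel (\<lambda>x. indicator S x * p x * (if t < x then 1 else 0))"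
proof -
  have "1 = integral\<^sup>L lborel (\<lambda>x. indicator S x * p x * (if x \<le> t then 1 else 0)
      + indicator S x * p x * (if t < x then 1 else 0))"
    by (subst p_one[symmetric], intro Bochner_Integration.integral_cong) auto
  also have "\<dots> = P t + integral\<^sup>L lborel (\<lambda>x. indicator S x * p x * (if t < x then 1 else 0))"
    unfolding P_eq by (intro Bochner_Integration.integral_add int_pS_bounded) auto
  finally show ?thesis by simp
qed

lemma int_nonneg_pS: "(\<And>x. 0 \<le> h x) \<Longrightarrow> 0 \<le> integral\<^sup>L lborel (\<lambda>x. indicator S x * p x * h x)"
  by (intro integral_nonneg_AE) (auto intro!: mult_nonneg_nonneg pS_nonneg)

lemma P_nonneg: "0 \<le> P t"
  unfolding P_eq by (rule int_nonneg_pS) simp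

lemma P_le1: "P t \<le> 1"
proof -
  have "0 \<le> integral\<^sup>L lborel (\<lambda>x. indicator S x * p x * (if t < x then 1 else 0))"
    by (rule int_nonneg_pS) simp
  then show ?thesis using one_minus_P[of t] by linarith
qed

lemma P_mono: "t \<le> t' \<Longrightarrow> P t \<le> P t'"
  unfolding P_eq
  by (intro integral_mono int_pS_bounded) (auto intro!: mult_left_mono pS_nonneg)

lemma P_meas[measurable]: "P \<in> borel_measurable borel"
  by (rule borel_measurable_mono) (auto simp: mono_def P_mono)

lemma K_sym: "K x y = K y x"
  by (simp add: Kker_def min.commute max.commute)

lemma K_meas[measurable]: "(\<lambda>(x, y). K x y) \<in> borel_measurable (lborel \<Otimes>\<^sub>M lborel)"
  unfolding Kker_def by measurable

lemma K_nonneg: "0 \<le> K x y"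
  unfolding Kker_def using P_nonneg P_le1 by simp

lemma K_le1: "K x y \<le> P (min x y)"
  unfolding Kker_def using P_nonneg P_le1 by (simp add: mult_left_le)

lemma K_le2: "K x y \<le> 1 - P (max x y)"
  unfolding Kker_def using P_nonneg P_le1 by (simp add: mult_left_le_one_le)

end

lemma prod_integrable:
  fixes u v :: "real \<Rightarrow> real"
  assumes u: "integrable lborel u" and v: "integrable lborel v"
  shows "integrable (lborel \<Otimes>\<^sub>M lborel) (\<lambda>(x, z). u x * v z)"
proof (rule lborel_pair.Fubini_integrable)
  have [measurable]: "u \<in> borel_measurable borel" "v \<in> borel_measurable borel"
    using u v by auto
  show "(\<lambda>(x, z). u x * v z) \<in> borel_measurable (lborel \<Otimes>\<^sub>M lborel)" by measurable
  have "integrable lborel (\<lambda>x. \<bar>u x\<bar> * (\<integral>z. \<bar>v z\<bar> \<partial>lborel))"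
    using u by (intro integrable_mult_left) auto
  then show "integrable lborel (\<lambda>x. \<integral>z. norm (case (x, z) of (x, z) \<Rightarrow> u x * v z) \<partial>lborel)"
    by (simp add: abs_mult)
  show "AE x in lborel. integrable lborel (\<lambda>z. case (x, z) of (x, z) \<Rightarrow> u x * v z)"
    using v by simp
qed

lemma prod_integral:
  fixes u v :: "real \<Rightarrow> real"
  assumes u: "integrable lborel u" and v: "integrable lborel v"
  shows "integral\<^sup>L (lborel \<Otimes>\<^sub>M lborel) (\<lambda>(x, z). u x * v z) = integral\<^sup>L lborel u * integral\<^sup>L lborel v"
proof -
  have "integral\<^sup>L (lborel \<Otimes>\<^sub>M lborel) (\<lambda>(x, z). u x * v z) = (\<integral>x. (\<integral>z. u x * v z \<partial>lborel) \<partial>lborel)"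
    using lborel_pair.integral_fst[OF prod_integrable[OF u v]] by simp
  also have "\<dots> = (\<integral>x. u x * integral\<^sup>L lborel v \<partial>lborel)" by simp
  also have "\<dots> = integral\<^sup>L lborel u * integral\<^sup>L lborel v" by simp
  finally show ?thesis .
qed

lemma CS_integrable:
  fixes u v r :: "'a \<Rightarrow> real"
  assumes [measurable]: "u \<in> borel_measurable M" "v \<in> borel_measurable M" "r \<in> borel_measurable M"
    and iu: "integrable M (\<lambda>x. (u x)\<^sup>2 * r x)" and iv: "integrable M (\<lambda>x. (v x)\<^sup>2 * r x)"
    and r: "AE x in M. 0 \<le> r x"
  shows "integrable M (\<lambda>x. u x * v x * r x)"
proof (rule Bochner_Integration.integrable_bound[OF Bochner_Integration.integrable_add[OF iu iv]])
  show "AE x in M. norm (u x * v x * r x) \<le> norm ((u x)\<^sup>2 * r x + (v x)\<^sup>2 * r x)"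
    using r
  proof eventually_elim
    case (elim x)
    have "0 \<le> (u x - v x)\<^sup>2" "0 \<le> (u x + v x)\<^sup>2" by simp_all
    then have "\<bar>u x * v x\<bar> \<le> (u x)\<^sup>2 + (v x)\<^sup>2"
      by (simp add: abs_if power2_eq_square algebra_simps)
    then have "\<bar>u x * v x\<bar> * r x \<le> ((u x)\<^sup>2 + (v x)\<^sup>2) * r x" using elim by (rule mult_right_mono)
    then show ?case using elim by (simp add: abs_mult algebra_simps)
  qed
qed simp

lemma CS_ineq:
  fixes u v r :: "'a \<Rightarrow> real"
  assumes [measurable]: "u \<in> borel_measurable M" "v \<in> borel_measurable M" "r \<in> borel_measurable M"
    and iu: "integrable M (\<lambda>x. (u x)\<^sup>2 * r x)" and iv: "integrable M (\<lambda>x. (v x)\<^sup>2 * r x)"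
    and r: "AE x in M. 0 \<le> r x"
  shows "(\<integral>x. u x * v x * r x \<partial>M)\<^sup>2 \<le> (\<integral>x. (u x)\<^sup>2 * r x \<partial>M) * (\<integral>x. (v x)\<^sup>2 * r x \<partial>M)"
proof -
  define A where "A = (\<integral>x. (u x)\<^sup>2 * r x \<partial>M)"
  define B where "B = (\<integral>x. (v x)\<^sup>2 * r x \<partial>M)"
  define C where "C = (\<integral>x. u x * v x * r x \<partial>M)"
  have iuv: "integrable M (\<lambda>x. u x * v x * r x)" by (rule CS_integrable) (use assms in auto)
  have quad: "0 \<le> A - 2 * l * C + l\<^sup>2 * B" for l
  proof -
    have "0 \<le> (\<integral>x. (u x - l * v x)\<^sup>2 * r x \<partial>M)"
      using r by (intro integral_nonneg_AE) (auto elim!: eventually_mono)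
    also have "(\<integral>x. (u x - l * v x)\<^sup>2 * r x \<partial>M) =
        (\<integral>x. (u x)\<^sup>2 * r x - (2 * l) * (u x * v x * r x) + l\<^sup>2 * ((v x)\<^sup>2 * r x) \<partial>M)"
      by (intro Bochner_Integration.integral_cong) (auto simp: power2_eq_square algebra_simps)
    also have "\<dots> = A - 2 * l * C + l\<^sup>2 * B"
      unfolding A_def B_def C_def using iu iv iuv by simp
    finally show ?thesis .
  qed
  have B0: "0 \<le> B" unfolding B_def using r by (intro integral_nonneg_AE) (auto elim!: eventually_mono)
  show ?thesis
  proof (cases "B = 0")
    case True
    have "C = 0"
    proof (rule ccontr)
      assume "C \<noteq> 0"
      have "0 \<le> A - 2 * ((A + 1) / (2 * C)) * C" using quad[of "(A + 1) / (2 * C)"] True by simp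
      then show False using \<open>C \<noteq> 0\<close> by simp
    qed
    then show ?thesis using True unfolding A_def[symmetric] B_def[symmetric] C_def[symmetric] by simp
  next
    case False
    then have Bp: "B > 0" using B0 by simp
    have "0 \<le> A - 2 * (C / B) * C + (C / B)\<^sup>2 * B" by (rule quad)
    moreover have "A - 2 * (C / B) * C + (C / B)\<^sup>2 * B = A - C\<^sup>2 / B"
      using Bp by (simp add: power2_eq_square field_simps)
    ultimately have "0 \<le> A - C\<^sup>2 / B" by simp
    then have "C\<^sup>2 \<le> A * B" using Bp by (simp add: field_simps)
    then show ?thesis unfolding A_def B_def C_def .
  qed
qed

definition sg :: "real \<Rightarrow> real \<Rightarrow> real \<Rightarrow> real" where
  "sg t x z = (if t < x then 1 else 0) - (if t < z then 1 else 0)"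

lemma sg_meas[measurable (raw)]:
  assumes [measurable]: "f \<in> borel_measurable M" "g \<in> borel_measurable M" "h \<in> borel_measurable M"
  shows "(\<lambda>\<omega>. sg (f \<omega>) (g \<omega>) (h \<omega>)) \<in> borel_measurable M"
  unfolding sg_def by measurable

lemma sg_sq_nonneg: "0 \<le> sg t x z * sg s x z"
  unfolding sg_def by auto

lemma abs_sg_le: "\<bar>sg t x z\<bar> \<le> 1"
  unfolding sg_def by auto

context setting
begin

lemma loc_int_on:
  assumes "loc_int a b f" "c \<in> S" "d \<in> S"
  shows "set_integrable lborel {c..d} f"
  using assms by (auto simp: loc_int_def Ivl_def)

lemma prim_diff:
  assumes f: "loc_int a b f" and x: "x \<in> S" and z: "z \<in> S"
  shows "integrable lborel (\<lambda>t. indicator S t * f t * sg t x z)"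
    and "prim x0 f x - prim x0 f z = (\<integral>t. indicator S t * f t * sg t x z \<partial>lborel)"
proof -
  have fm[measurable]: "f \<in> borel_measurable borel" using f by (simp add: loc_int_def)
  have gen: "integrable lborel (\<lambda>t. indicator {u..<v} t * f t)
       \<and> (LBINT t=u..v. f t) = (\<integral>t. indicator {u..<v} t * f t \<partial>lborel)"
    if "u \<in> S" "v \<in> S" "u \<le> v" for u v
  proof
    have "set_integrable lborel {u..v} f" by (rule loc_int_on[OF f that(1,2)])
    then have "set_integrable lborel {u..<v} f" by (rule set_integrable_subset) auto
    then show "integrable lborel (\<lambda>t. indicator {u..<v} t * f t)"
      by (simp add: set_integrable_def)
    show "(LBINT t=u..v. f t) = (\<integral>t. indicator {u..<v} t * f t \<partial>lborel)"
      using that by (simp add: interval_integral_Ico set_lebesgue_integral_def)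
  qed
  have sum: "prim x0 f x - prim x0 f z = (LBINT t=z..x. f t)"
  proof -
    define m where "m = min z (min x0 x)"
    define M where "M = max z (max x0 x)"
    have mS: "m \<in> S" "M \<in> S" using x z x0 by (auto simp: m_def M_def min_def max_def)
    have "set_integrable lborel {m..M} f" by (rule loc_int_on[OF f mS(1,2)])
    then have "set_integrable lborel {m<..<M} f"
      by (rule set_integrable_subset) auto
    moreover have "einterval (ereal m) (ereal M) = {m<..<M}" by (auto simp: einterval_def)
    ultimately have "set_integrable lborel (einterval (ereal m) (ereal M)) f" by simp
    moreover have "m \<le> M" by (simp add: m_def M_def)
    ultimately have "interval_lebesgue_integrable lborel (ereal m) (ereal M) f"
      by (simp add: interval_lebesgue_integrable_def)
    moreover have "ereal m = min (ereal z) (min (ereal x0) (ereal x))" "ereal M = max (ereal z) (max (ereal x0) (ereal x))"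
      by (auto simp: m_def M_def min_def max_def)
    ultimately have "interval_lebesgue_integrable lborel (min (ereal z) (min (ereal x0) (ereal x))) (max (ereal z) (max (ereal x0) (ereal x))) f"
      by simp
    from interval_integral_sum[OF this]
    have "(LBINT t=ereal z..ereal x0. f t) + (LBINT t=ereal x0..ereal x. f t) = (LBINT t=ereal z..ereal x. f t)" .
    moreover have "prim x0 f z = - (LBINT t=ereal z..ereal x0. f t)"
      unfolding prim_def by (rule interval_integral_endpoints_reverse)
    ultimately show ?thesis unfolding prim_def by simp
  qed
  have "integrable lborel (\<lambda>t. indicator S t * f t * sg t x z)
     \<and> (LBINT t=z..x. f t) = (\<integral>t. indicator S t * f t * sg t x z \<partial>lborel)"
  proof (cases "z \<le> x")
    case True
    have eq: "indicator S t * f t * sg t x z = indicator {z..<x} t * f t" for t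
      using S_Icc[OF z x] True by (auto simp: sg_def indicator_def subset_iff)
    show ?thesis using gen[OF z x True] by (simp add: eq)
  next
    case False
    have eq: "indicator S t * f t * sg t x z = - (indicator {x..<z} t * f t)" for t
      using S_Icc[OF x z] False by (auto simp: sg_def indicator_def subset_iff)
    have "(LBINT t=z..x. f t) = - (LBINT t=x..z. f t)" by (rule interval_integral_endpoints_reverse)
    then show ?thesis using gen[OF x z] False by (simp add: eq)
  qed
  then show "integrable lborel (\<lambda>t. indicator S t * f t * sg t x z)"
    "prim x0 f x - prim x0 f z = (\<integral>t. indicator S t * f t * sg t x z \<partial>lborel)"
    using sum by auto
qed

end

lemma prod_integrable':
  fixes u v :: "real \<Rightarrow> real"
  assumes u: "integrable lborel u" and v: "integrable lborel v"
  shows "integrable (lborel \<Otimes>\<^sub>M lborel) (\<lambda>\<omega>. u (fst \<omega>) * v (snd \<omega>))"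
proof -
  have "(\<lambda>\<omega>. u (fst \<omega>) * v (snd \<omega>)) = (\<lambda>(x, z). u x * v z)" by (auto simp: fun_eq_iff)
  then show ?thesis using prod_integrable[OF u v] by simp
qed

lemma prod_integral':
  fixes u v :: "real \<Rightarrow> real"
  assumes u: "integrable lborel u" and v: "integrable lborel v"
  shows "integral\<^sup>L (lborel \<Otimes>\<^sub>M lborel) (\<lambda>\<omega>. u (fst \<omega>) * v (snd \<omega>)) = integral\<^sup>L lborel u * integral\<^sup>L lborel v"
proof -
  have "(\<lambda>\<omega>. u (fst \<omega>) * v (snd \<omega>)) = (\<lambda>(x, z). u x * v z)" by (auto simp: fun_eq_iff)
  then show ?thesis using prod_integral[OF u v] by simp
qed

context setting
begin

abbreviation "ap t x \<equiv> (if t < x then 1 else 0 :: real)"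

lemma int_a: "integrable lborel (\<lambda>x. indicator S x * p x * ap t x)"
  by (rule int_pS_bounded) auto

lemma int_aa: "integrable lborel (\<lambda>x. indicator S x * p x * (ap t x * ap s x))"
  by (rule int_pS_bounded) auto

lemma int_1: "integrable lborel (\<lambda>x. indicator S x * p x)"
  by (rule p_int)

lemma val_a: "integral\<^sup>L lborel (\<lambda>x. indicator S x * p x * ap t x) = 1 - P t"
  using one_minus_P[of t] by simp

lemma val_aa: "integral\<^sup>L lborel (\<lambda>x. indicator S x * p x * (ap t x * ap s x)) = 1 - P (max t s)"
proof -
  have "integral\<^sup>L lborel (\<lambda>x. indicator S x * p x * (ap t x * ap s x)) = integral\<^sup>L lborel (\<lambda>x. indicator S x * p x * ap (max t s) x)"
    by (intro Bochner_Integration.integral_cong) auto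
  then show ?thesis using val_a[of "max t s"] by simp
qed

lemma D_expand:
  "indicator S x * p x * (indicator S z * p z) * (sg t x z * sg s x z) =
     (indicator S x * p x * (ap t x * ap s x)) * (indicator S z * p z)
   + (indicator S x * p x) * (indicator S z * p z * (ap t z * ap s z))
   - (indicator S x * p x * ap t x) * (indicator S z * p z * ap s z)
   - (indicator S x * p x * ap s x) * (indicator S z * p z * ap t z)"
  unfolding sg_def by (simp add: algebra_simps)

lemma D_int_val:
  shows "integrable (lborel \<Otimes>\<^sub>M lborel)
     (\<lambda>\<omega>. indicator S (fst \<omega>) * p (fst \<omega>) * (indicator S (snd \<omega>) * p (snd \<omega>)) * (sg t (fst \<omega>) (snd \<omega>) * sg s (fst \<omega>) (snd \<omega>)))"
    and "integral\<^sup>L (lborel \<Otimes>\<^sub>M lborel)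
     (\<lambda>\<omega>. indicator S (fst \<omega>) * p (fst \<omega>) * (indicator S (snd \<omega>) * p (snd \<omega>)) * (sg t (fst \<omega>) (snd \<omega>) * sg s (fst \<omega>) (snd \<omega>)))
     = 2 * K t s"
proof -
  let ?u1 = "\<lambda>x. indicator S x * p x * (ap t x * ap s x)"
  let ?v1 = "\<lambda>x. indicator S x * p x"
  let ?u3 = "\<lambda>x. indicator S x * p x * ap t x"
  let ?v3 = "\<lambda>x. indicator S x * p x * ap s x"
  note ints = int_aa[of t s] int_1 int_a[of t] int_a[of s]
  have i1: "integrable (lborel \<Otimes>\<^sub>M lborel) (\<lambda>\<omega>. ?u1 (fst \<omega>) * ?v1 (snd \<omega>))"
   and i2: "integrable (lborel \<Otimes>\<^sub>M lborel) (\<lambda>\<omega>. ?v1 (fst \<omega>) * ?u1 (snd \<omega>))"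
   and i3: "integrable (lborel \<Otimes>\<^sub>M lborel) (\<lambda>\<omega>. ?u3 (fst \<omega>) * ?v3 (snd \<omega>))"
   and i4: "integrable (lborel \<Otimes>\<^sub>M lborel) (\<lambda>\<omega>. ?v3 (fst \<omega>) * ?u3 (snd \<omega>))"
    using ints by (auto intro!: prod_integrable')
  have eq: "(\<lambda>\<omega>. indicator S (fst \<omega>) * p (fst \<omega>) * (indicator S (snd \<omega>) * p (snd \<omega>)) * (sg t (fst \<omega>) (snd \<omega>) * sg s (fst \<omega>) (snd \<omega>)))
     = (\<lambda>\<omega>. ?u1 (fst \<omega>) * ?v1 (snd \<omega>) + ?v1 (fst \<omega>) * ?u1 (snd \<omega>) - ?u3 (fst \<omega>) * ?v3 (snd \<omega>) - ?v3 (fst \<omega>) * ?u3 (snd \<omega>))"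
    by (rule ext) (rule D_expand)
  show "integrable (lborel \<Otimes>\<^sub>M lborel)
     (\<lambda>\<omega>. indicator S (fst \<omega>) * p (fst \<omega>) * (indicator S (snd \<omega>) * p (snd \<omega>)) * (sg t (fst \<omega>) (snd \<omega>) * sg s (fst \<omega>) (snd \<omega>)))"
    unfolding eq using i1 i2 i3 i4 by auto
  have "integral\<^sup>L (lborel \<Otimes>\<^sub>M lborel)
     (\<lambda>\<omega>. ?u1 (fst \<omega>) * ?v1 (snd \<omega>) + ?v1 (fst \<omega>) * ?u1 (snd \<omega>) - ?u3 (fst \<omega>) * ?v3 (snd \<omega>) - ?v3 (fst \<omega>) * ?u3 (snd \<omega>))
     = (1 - P (max t s)) * 1 + 1 * (1 - P (max t s)) - (1 - P t) * (1 - P s) - (1 - P s) * (1 - P t)"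
  proof -
    have e1: "integral\<^sup>L (lborel \<Otimes>\<^sub>M lborel) (\<lambda>\<omega>. ?u1 (fst \<omega>) * ?v1 (snd \<omega>)) = (1 - P (max t s)) * 1"
      using prod_integral'[OF int_aa[of t s] int_1] val_aa[of t s] p_one by simp
    have e2: "integral\<^sup>L (lborel \<Otimes>\<^sub>M lborel) (\<lambda>\<omega>. ?v1 (fst \<omega>) * ?u1 (snd \<omega>)) = 1 * (1 - P (max t s))"
      using prod_integral'[OF int_1 int_aa[of t s]] val_aa[of t s] p_one by simp
    have e3: "integral\<^sup>L (lborel \<Otimes>\<^sub>M lborel) (\<lambda>\<omega>. ?u3 (fst \<omega>) * ?v3 (snd \<omega>)) = (1 - P t) * (1 - P s)"
      using prod_integral'[OF int_a[of t] int_a[of s]] val_a[of t] val_a[of s] by simp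
    have e4: "integral\<^sup>L (lborel \<Otimes>\<^sub>M lborel) (\<lambda>\<omega>. ?v3 (fst \<omega>) * ?u3 (snd \<omega>)) = (1 - P s) * (1 - P t)"
      using prod_integral'[OF int_a[of s] int_a[of t]] val_a[of t] val_a[of s] by simp
    have "integral\<^sup>L (lborel \<Otimes>\<^sub>M lborel)
     (\<lambda>\<omega>. ?u1 (fst \<omega>) * ?v1 (snd \<omega>) + ?v1 (fst \<omega>) * ?u1 (snd \<omega>) - ?u3 (fst \<omega>) * ?v3 (snd \<omega>) - ?v3 (fst \<omega>) * ?u3 (snd \<omega>))
     = integral\<^sup>L (lborel \<Otimes>\<^sub>M lborel) (\<lambda>\<omega>. ?u1 (fst \<omega>) * ?v1 (snd \<omega>) + ?v1 (fst \<omega>) * ?u1 (snd \<omega>) - ?u3 (fst \<omega>) * ?v3 (snd \<omega>))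
      - integral\<^sup>L (lborel \<Otimes>\<^sub>M lborel) (\<lambda>\<omega>. ?v3 (fst \<omega>) * ?u3 (snd \<omega>))"
      by (rule Bochner_Integration.integral_diff[OF Bochner_Integration.integrable_diff[OF Bochner_Integration.integrable_add[OF i1 i2] i3] i4])
    also have "\<dots> = integral\<^sup>L (lborel \<Otimes>\<^sub>M lborel) (\<lambda>\<omega>. ?u1 (fst \<omega>) * ?v1 (snd \<omega>) + ?v1 (fst \<omega>) * ?u1 (snd \<omega>))
      - integral\<^sup>L (lborel \<Otimes>\<^sub>M lborel) (\<lambda>\<omega>. ?u3 (fst \<omega>) * ?v3 (snd \<omega>))
      - integral\<^sup>L (lborel \<Otimes>\<^sub>M lborel) (\<lambda>\<omega>. ?v3 (fst \<omega>) * ?u3 (snd \<omega>))"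
      by (subst Bochner_Integration.integral_diff[OF Bochner_Integration.integrable_add[OF i1 i2] i3]) (rule refl)
    also have "\<dots> = integral\<^sup>L (lborel \<Otimes>\<^sub>M lborel) (\<lambda>\<omega>. ?u1 (fst \<omega>) * ?v1 (snd \<omega>))
      + integral\<^sup>L (lborel \<Otimes>\<^sub>M lborel) (\<lambda>\<omega>. ?v1 (fst \<omega>) * ?u1 (snd \<omega>))
      - integral\<^sup>L (lborel \<Otimes>\<^sub>M lborel) (\<lambda>\<omega>. ?u3 (fst \<omega>) * ?v3 (snd \<omega>))
      - integral\<^sup>L (lborel \<Otimes>\<^sub>M lborel) (\<lambda>\<omega>. ?v3 (fst \<omega>) * ?u3 (snd \<omega>))"
      by (subst Bochner_Integration.integral_add[OF i1 i2]) (rule refl)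
    finally show ?thesis unfolding e1 e2 e3 e4 .
  qed
  also have "\<dots> = 2 * K t s"
    by (cases "t \<le> s") (auto simp: Kker_def max_def min_def algebra_simps)
  finally show "integral\<^sup>L (lborel \<Otimes>\<^sub>M lborel)
     (\<lambda>\<omega>. indicator S (fst \<omega>) * p (fst \<omega>) * (indicator S (snd \<omega>) * p (snd \<omega>)) * (sg t (fst \<omega>) (snd \<omega>) * sg s (fst \<omega>) (snd \<omega>)))
     = 2 * K t s" unfolding eq .
qed

end

context setting
begin

lemma L2p_int:
  assumes "L2 a b p F"
  shows "integrable lborel (\<lambda>x. (F x)\<^sup>2 * (indicator S x * p x))"
  using assms by (simp add: L2_def set_integrable_def mult_ac)

lemma L2p_meas: "L2 a b p F \<Longrightarrow> F \<in> borel_measurable borel"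
  by (simp add: L2_def)

lemma rho_nonneg_AE: "AE x in lborel. 0 \<le> indicator S x * p x"
  using pS_nonneg by simp

lemma L2p_prod_int:
  assumes F: "L2 a b p F" and G: "L2 a b p G"
  shows "integrable lborel (\<lambda>x. F x * G x * (indicator S x * p x))"
  by (rule CS_integrable[where M=lborel]) (use L2p_meas[OF F] L2p_meas[OF G] L2p_int[OF F] L2p_int[OF G] rho_nonneg_AE in auto)

lemma L2p_one: "L2 a b p (\<lambda>x. 1)"
  using dens by (simp add: L2_def prob_density_def)

lemma L2p_lin_int:
  assumes F: "L2 a b p F"
  shows "integrable lborel (\<lambda>x. F x * (indicator S x * p x))"
  using L2p_prod_int[OF F L2p_one] by simp

lemma Ep_eq: "Ep a b p F = integral\<^sup>L lborel (\<lambda>x. F x * (indicator S x * p x))"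
  by (simp add: Ep_def set_lebesgue_integral_def mult_ac)

lemma cov_expand:
  assumes F: "L2 a b p F" and G: "L2 a b p G"
  shows "Ep a b p (\<lambda>x. (F x - Ep a b p F) * (G x - Ep a b p G)) =
     integral\<^sup>L lborel (\<lambda>x. F x * G x * (indicator S x * p x)) - Ep a b p F * Ep a b p G"
proof -
  define EF where "EF = Ep a b p F"
  define EG where "EG = Ep a b p G"
  have iFG: "integrable lborel (\<lambda>x. F x * G x * (indicator S x * p x))" by (rule L2p_prod_int[OF F G])
  have iF: "integrable lborel (\<lambda>x. F x * (indicator S x * p x))" by (rule L2p_lin_int[OF F])
  have iG: "integrable lborel (\<lambda>x. G x * (indicator S x * p x))" by (rule L2p_lin_int[OF G])
  have "Ep a b p (\<lambda>x. (F x - EF) * (G x - EG)) =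
     integral\<^sup>L lborel (\<lambda>x. F x * G x * (indicator S x * p x) - EG * (F x * (indicator S x * p x))
        - EF * (G x * (indicator S x * p x)) + EF * EG * (indicator S x * p x))"
    unfolding Ep_eq by (intro Bochner_Integration.integral_cong) (auto simp: algebra_simps)
  also have "\<dots> = integral\<^sup>L lborel (\<lambda>x. F x * G x * (indicator S x * p x)) - EG * EF - EF * EG + EF * EG * 1"
    using iFG iF iG p_int
    by (simp add: Bochner_Integration.integral_add Bochner_Integration.integral_diff p_one EF_def EG_def Ep_eq)
  finally show ?thesis unfolding EF_def EG_def by simp
qed

lemma cov_2d:
  assumes F: "L2 a b p F" and G: "L2 a b p G"
  shows "integrable (lborel \<Otimes>\<^sub>M lborel) (\<lambda>\<omega>. indicator S (fst \<omega>) * p (fst \<omega>) * (indicator S (snd \<omega>) * p (snd \<omega>))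
           * ((F (fst \<omega>) - F (snd \<omega>)) * (G (fst \<omega>) - G (snd \<omega>))))"
    and "integral\<^sup>L (lborel \<Otimes>\<^sub>M lborel) (\<lambda>\<omega>. indicator S (fst \<omega>) * p (fst \<omega>) * (indicator S (snd \<omega>) * p (snd \<omega>))
           * ((F (fst \<omega>) - F (snd \<omega>)) * (G (fst \<omega>) - G (snd \<omega>))))
         = 2 * Ep a b p (\<lambda>x. (F x - Ep a b p F) * (G x - Ep a b p G))"
proof -
  let ?r = "\<lambda>x. indicator S x * p x"
  let ?u = "\<lambda>x. F x * G x * (indicator S x * p x)"
  let ?f = "\<lambda>x. F x * (indicator S x * p x)"
  let ?g = "\<lambda>x. G x * (indicator S x * p x)"
  have iFG: "integrable lborel ?u" by (rule L2p_prod_int[OF F G])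
  have iF: "integrable lborel ?f" by (rule L2p_lin_int[OF F])
  have iG: "integrable lborel ?g" by (rule L2p_lin_int[OF G])
  have i1: "integrable (lborel \<Otimes>\<^sub>M lborel) (\<lambda>\<omega>. ?u (fst \<omega>) * ?r (snd \<omega>))" by (rule prod_integrable'[OF iFG p_int])
  have i2: "integrable (lborel \<Otimes>\<^sub>M lborel) (\<lambda>\<omega>. ?r (fst \<omega>) * ?u (snd \<omega>))" by (rule prod_integrable'[OF p_int iFG])
  have i3: "integrable (lborel \<Otimes>\<^sub>M lborel) (\<lambda>\<omega>. ?f (fst \<omega>) * ?g (snd \<omega>))" by (rule prod_integrable'[OF iF iG])
  have i4: "integrable (lborel \<Otimes>\<^sub>M lborel) (\<lambda>\<omega>. ?g (fst \<omega>) * ?f (snd \<omega>))" by (rule prod_integrable'[OF iG iF])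
  have eq: "(\<lambda>\<omega>. indicator S (fst \<omega>) * p (fst \<omega>) * (indicator S (snd \<omega>) * p (snd \<omega>))
           * ((F (fst \<omega>) - F (snd \<omega>)) * (G (fst \<omega>) - G (snd \<omega>))))
     = (\<lambda>\<omega>. ?u (fst \<omega>) * ?r (snd \<omega>) + ?r (fst \<omega>) * ?u (snd \<omega>) - ?f (fst \<omega>) * ?g (snd \<omega>) - ?g (fst \<omega>) * ?f (snd \<omega>))"
    by (rule ext) (simp add: algebra_simps)
  show "integrable (lborel \<Otimes>\<^sub>M lborel) (\<lambda>\<omega>. indicator S (fst \<omega>) * p (fst \<omega>) * (indicator S (snd \<omega>) * p (snd \<omega>))
           * ((F (fst \<omega>) - F (snd \<omega>)) * (G (fst \<omega>) - G (snd \<omega>))))"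
    unfolding eq using i1 i2 i3 i4 by auto
  have e1: "integral\<^sup>L (lborel \<Otimes>\<^sub>M lborel) (\<lambda>\<omega>. ?u (fst \<omega>) * ?r (snd \<omega>)) = integral\<^sup>L lborel ?u * 1"
    using prod_integral'[OF iFG p_int] p_one by simp
  have e2: "integral\<^sup>L (lborel \<Otimes>\<^sub>M lborel) (\<lambda>\<omega>. ?r (fst \<omega>) * ?u (snd \<omega>)) = 1 * integral\<^sup>L lborel ?u"
    using prod_integral'[OF p_int iFG] p_one by simp
  have e3: "integral\<^sup>L (lborel \<Otimes>\<^sub>M lborel) (\<lambda>\<omega>. ?f (fst \<omega>) * ?g (snd \<omega>)) = Ep a b p F * Ep a b p G"
    using prod_integral'[OF iF iG] by (simp add: Ep_eq)
  have e4: "integral\<^sup>L (lborel \<Otimes>\<^sub>M lborel) (\<lambda>\<omega>. ?g (fst \<omega>) * ?f (snd \<omega>)) = Ep a b p G * Ep a b p F"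
    using prod_integral'[OF iG iF] by (simp add: Ep_eq)
  have "integral\<^sup>L (lborel \<Otimes>\<^sub>M lborel)
     (\<lambda>\<omega>. ?u (fst \<omega>) * ?r (snd \<omega>) + ?r (fst \<omega>) * ?u (snd \<omega>) - ?f (fst \<omega>) * ?g (snd \<omega>) - ?g (fst \<omega>) * ?f (snd \<omega>))
     = integral\<^sup>L (lborel \<Otimes>\<^sub>M lborel) (\<lambda>\<omega>. ?u (fst \<omega>) * ?r (snd \<omega>) + ?r (fst \<omega>) * ?u (snd \<omega>) - ?f (fst \<omega>) * ?g (snd \<omega>))
      - integral\<^sup>L (lborel \<Otimes>\<^sub>M lborel) (\<lambda>\<omega>. ?g (fst \<omega>) * ?f (snd \<omega>))"
    by (rule Bochner_Integration.integral_diff[OF Bochner_Integration.integrable_diff[OF Bochner_Integration.integrable_add[OF i1 i2] i3] i4])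
  also have "\<dots> = integral\<^sup>L (lborel \<Otimes>\<^sub>M lborel) (\<lambda>\<omega>. ?u (fst \<omega>) * ?r (snd \<omega>) + ?r (fst \<omega>) * ?u (snd \<omega>))
      - integral\<^sup>L (lborel \<Otimes>\<^sub>M lborel) (\<lambda>\<omega>. ?f (fst \<omega>) * ?g (snd \<omega>))
      - integral\<^sup>L (lborel \<Otimes>\<^sub>M lborel) (\<lambda>\<omega>. ?g (fst \<omega>) * ?f (snd \<omega>))"
    by (subst Bochner_Integration.integral_diff[OF Bochner_Integration.integrable_add[OF i1 i2] i3]) (rule refl)
  also have "\<dots> = integral\<^sup>L (lborel \<Otimes>\<^sub>M lborel) (\<lambda>\<omega>. ?u (fst \<omega>) * ?r (snd \<omega>))
      + integral\<^sup>L (lborel \<Otimes>\<^sub>M lborel) (\<lambda>\<omega>. ?r (fst \<omega>) * ?u (snd \<omega>))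
      - integral\<^sup>L (lborel \<Otimes>\<^sub>M lborel) (\<lambda>\<omega>. ?f (fst \<omega>) * ?g (snd \<omega>))
      - integral\<^sup>L (lborel \<Otimes>\<^sub>M lborel) (\<lambda>\<omega>. ?g (fst \<omega>) * ?f (snd \<omega>))"
    by (subst Bochner_Integration.integral_add[OF i1 i2]) (rule refl)
  also have "\<dots> = 2 * Ep a b p (\<lambda>x. (F x - Ep a b p F) * (G x - Ep a b p G))"
    unfolding e1 e2 e3 e4 cov_expand[OF F G] by simp
  finally show "integral\<^sup>L (lborel \<Otimes>\<^sub>M lborel) (\<lambda>\<omega>. indicator S (fst \<omega>) * p (fst \<omega>) * (indicator S (snd \<omega>) * p (snd \<omega>))
           * ((F (fst \<omega>) - F (snd \<omega>)) * (G (fst \<omega>) - G (snd \<omega>))))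
         = 2 * Ep a b p (\<lambda>x. (F x - Ep a b p F) * (G x - Ep a b p G))"
    unfolding eq .
qed

end

context setting
begin

lemma hoeffding:
  assumes f: "loc_int a b f" and g: "loc_int a b g"
    and F: "L2 a b p (prim x0 f)" and G: "L2 a b p (prim x0 g)"
    and fin: "(\<integral>\<^sup>+ \<omega>. ennreal (indicator S (fst \<omega>) * indicator S (snd \<omega>) * K (fst \<omega>) (snd \<omega>) * \<bar>f (fst \<omega>)\<bar> * \<bar>g (snd \<omega>)\<bar>) \<partial>(lborel \<Otimes>\<^sub>M lborel)) < \<infinity>"
  shows "Ep a b p (\<lambda>x. (prim x0 f x - Ep a b p (prim x0 f)) * (prim x0 g x - Ep a b p (prim x0 g)))
     = integral\<^sup>L (lborel \<Otimes>\<^sub>M lborel) (\<lambda>\<omega>. indicator S (fst \<omega>) * indicator S (snd \<omega>) * K (fst \<omega>) (snd \<omega>) * f (fst \<omega>) * g (snd \<omega>))"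
proof -
  have fm[measurable]: "f \<in> borel_measurable borel" using f by (simp add: loc_int_def)
  have gm[measurable]: "g \<in> borel_measurable borel" using g by (simp add: loc_int_def)
  interpret Q: pair_sigma_finite "lborel \<Otimes>\<^sub>M lborel :: (real \<times> real) measure" "lborel \<Otimes>\<^sub>M lborel :: (real \<times> real) measure"
    unfolding lborel_prod by (rule lborel_pair.pair_sigma_finite_axioms)
  define r where "r x = indicator S x * p x" for x
  have r_meas[measurable]: "r \<in> borel_measurable borel" unfolding r_def by measurable
  define D where "D ts xz = r (fst xz) * r (snd xz) * (sg (fst ts) (fst xz) (snd xz) * sg (snd ts) (fst xz) (snd xz))"
    for ts xz :: "real \<times> real"
  define c where "c ts = indicator S (fst ts) * f (fst ts) * (indicator S (snd ts) * g (snd ts))" for ts :: "real \<times> real"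
  define \<Phi> where "\<Phi> xz ts = D ts xz * c ts" for xz ts :: "real \<times> real"
  have D_nonneg: "0 \<le> D ts xz" for ts xz
    unfolding D_def r_def by (rule mult_nonneg_nonneg[OF mult_nonneg_nonneg]) (rule pS_nonneg sg_sq_nonneg)+
  have D_int: "integrable (lborel \<Otimes>\<^sub>M lborel) (D ts)" and D_val: "integral\<^sup>L (lborel \<Otimes>\<^sub>M lborel) (D ts) = 2 * K (fst ts) (snd ts)" for ts
    using D_int_val[of "fst ts" "snd ts"] unfolding D_def[abs_def] r_def by simp_all
  have \<Phi>m[measurable]: "(\<lambda>\<omega>. \<Phi> (fst \<omega>) (snd \<omega>)) \<in> borel_measurable ((lborel \<Otimes>\<^sub>M lborel) \<Otimes>\<^sub>M (lborel \<Otimes>\<^sub>M lborel))"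
    unfolding \<Phi>_def D_def c_def by measurable
  have \<Phi>int: "integrable ((lborel \<Otimes>\<^sub>M lborel) \<Otimes>\<^sub>M (lborel \<Otimes>\<^sub>M lborel)) (case_prod \<Phi>)"
  proof (subst integrable_iff_bounded, intro conjI)
    show "case_prod \<Phi> \<in> borel_measurable ((lborel \<Otimes>\<^sub>M lborel) \<Otimes>\<^sub>M (lborel \<Otimes>\<^sub>M lborel))"
      using \<Phi>m by (simp add: case_prod_beta')
    have "(\<integral>\<^sup>+ \<omega>. ennreal (norm (case_prod \<Phi> \<omega>)) \<partial>((lborel \<Otimes>\<^sub>M lborel) \<Otimes>\<^sub>M (lborel \<Otimes>\<^sub>M lborel)))
       = (\<integral>\<^sup>+ ts. (\<integral>\<^sup>+ xz. ennreal (norm (\<Phi> xz ts)) \<partial>(lborel \<Otimes>\<^sub>M lborel)) \<partial>(lborel \<Otimes>\<^sub>M lborel))"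
      by (subst Q.nn_integral_snd[symmetric]) (auto simp: case_prod_beta')
    also have "\<dots> = (\<integral>\<^sup>+ ts. ennreal (2 * (indicator S (fst ts) * indicator S (snd ts) * K (fst ts) (snd ts) * \<bar>f (fst ts)\<bar> * \<bar>g (snd ts)\<bar>)) \<partial>(lborel \<Otimes>\<^sub>M lborel))"
    proof (intro nn_integral_cong)
      fix ts :: "real \<times> real"
      have "(\<integral>\<^sup>+ xz. ennreal (norm (\<Phi> xz ts)) \<partial>(lborel \<Otimes>\<^sub>M lborel)) = (\<integral>\<^sup>+ xz. ennreal (D ts xz) * ennreal \<bar>c ts\<bar> \<partial>(lborel \<Otimes>\<^sub>M lborel))"
        unfolding \<Phi>_def using D_nonneg by (intro nn_integral_cong) (simp add: abs_mult ennreal_mult)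
      also have "\<dots> = (\<integral>\<^sup>+ xz. ennreal (D ts xz) \<partial>(lborel \<Otimes>\<^sub>M lborel)) * ennreal \<bar>c ts\<bar>"
        by (rule nn_integral_multc) (simp add: D_def)
      also have "(\<integral>\<^sup>+ xz. ennreal (D ts xz) \<partial>(lborel \<Otimes>\<^sub>M lborel)) = ennreal (2 * K (fst ts) (snd ts))"
        using D_int D_val D_nonneg by (subst nn_integral_eq_integral) auto
      finally show "(\<integral>\<^sup>+ xz. ennreal (norm (\<Phi> xz ts)) \<partial>(lborel \<Otimes>\<^sub>M lborel)) =
          ennreal (2 * (indicator S (fst ts) * indicator S (snd ts) * K (fst ts) (snd ts) * \<bar>f (fst ts)\<bar> * \<bar>g (snd ts)\<bar>))"
        using K_nonneg by (simp add: c_def abs_mult ennreal_mult[symmetric] mult_ac)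
    qed
    also have "\<dots> = 2 * (\<integral>\<^sup>+ \<omega>. ennreal (indicator S (fst \<omega>) * indicator S (snd \<omega>) * K (fst \<omega>) (snd \<omega>) * \<bar>f (fst \<omega>)\<bar> * \<bar>g (snd \<omega>)\<bar>) \<partial>(lborel \<Otimes>\<^sub>M lborel))"
      by (subst nn_integral_cmult[symmetric]) (auto intro!: nn_integral_cong simp: ennreal_mult')
    also have "\<dots> < \<infinity>" using fin by (simp add: ennreal_mult_less_top)
    finally show "(\<integral>\<^sup>+ \<omega>. ennreal (norm (case_prod \<Phi> \<omega>)) \<partial>((lborel \<Otimes>\<^sub>M lborel) \<Otimes>\<^sub>M (lborel \<Otimes>\<^sub>M lborel))) < \<infinity>" .
  qed
  have fub: "(\<integral>ts. (\<integral>xz. \<Phi> xz ts \<partial>(lborel \<Otimes>\<^sub>M lborel)) \<partial>(lborel \<Otimes>\<^sub>M lborel))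
      = (\<integral>xz. (\<integral>ts. \<Phi> xz ts \<partial>(lborel \<Otimes>\<^sub>M lborel)) \<partial>(lborel \<Otimes>\<^sub>M lborel))"
    by (rule Q.Fubini_integral[OF \<Phi>int])
  have lhs: "(\<integral>xz. \<Phi> xz ts \<partial>(lborel \<Otimes>\<^sub>M lborel)) = 2 * (indicator S (fst ts) * indicator S (snd ts) * K (fst ts) (snd ts) * f (fst ts) * g (snd ts))" for ts
    unfolding \<Phi>_def integral_mult_left_zero D_val by (simp add: c_def mult_ac)
  have rhs: "(\<integral>ts. \<Phi> xz ts \<partial>(lborel \<Otimes>\<^sub>M lborel)) = r (fst xz) * r (snd xz) *
       ((prim x0 f (fst xz) - prim x0 f (snd xz)) * (prim x0 g (fst xz) - prim x0 g (snd xz)))" for xz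
  proof (cases "fst xz \<in> S \<and> snd xz \<in> S")
    case True
    let ?x = "fst xz" and ?z = "snd xz"
    note pf = prim_diff[OF f, of ?x ?z] and pg = prim_diff[OF g, of ?x ?z]
    have "(\<integral>ts. \<Phi> xz ts \<partial>(lborel \<Otimes>\<^sub>M lborel)) = (\<integral>ts. r ?x * r ?z * ((indicator S (fst ts) * f (fst ts) * sg (fst ts) ?x ?z) * (indicator S (snd ts) * g (snd ts) * sg (snd ts) ?x ?z)) \<partial>(lborel \<Otimes>\<^sub>M lborel))"
      unfolding \<Phi>_def D_def c_def by (intro Bochner_Integration.integral_cong) (auto simp: mult_ac)
    also have "\<dots> = r ?x * r ?z * (\<integral>ts. (indicator S (fst ts) * f (fst ts) * sg (fst ts) ?x ?z) * (indicator S (snd ts) * g (snd ts) * sg (snd ts) ?x ?z) \<partial>(lborel \<Otimes>\<^sub>M lborel))"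
      by (rule integral_mult_right_zero)
    also have "(\<integral>ts. (indicator S (fst ts) * f (fst ts) * sg (fst ts) ?x ?z) * (indicator S (snd ts) * g (snd ts) * sg (snd ts) ?x ?z) \<partial>(lborel \<Otimes>\<^sub>M lborel))
       = (prim x0 f ?x - prim x0 f ?z) * (prim x0 g ?x - prim x0 g ?z)"
      using True pf pg prod_integral'[of "\<lambda>t. indicator S t * f t * sg t ?x ?z" "\<lambda>t. indicator S t * g t * sg t ?x ?z"]
      by simp
    finally show ?thesis .
  next
    case False
    then have "r (fst xz) * r (snd xz) = 0" by (auto simp: r_def)
    then have "\<Phi> xz ts = 0" for ts unfolding \<Phi>_def D_def by simp
    then show ?thesis using \<open>r (fst xz) * r (snd xz) = 0\<close> by simp
  qed
  have "2 * integral\<^sup>L (lborel \<Otimes>\<^sub>M lborel) (\<lambda>\<omega>. indicator S (fst \<omega>) * indicator S (snd \<omega>) * K (fst \<omega>) (snd \<omega>) * f (fst \<omega>) * g (snd \<omega>))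
      = (\<integral>ts. (\<integral>xz. \<Phi> xz ts \<partial>(lborel \<Otimes>\<^sub>M lborel)) \<partial>(lborel \<Otimes>\<^sub>M lborel))"
    unfolding lhs by simp
  also have "\<dots> = (\<integral>xz. r (fst xz) * r (snd xz) *
       ((prim x0 f (fst xz) - prim x0 f (snd xz)) * (prim x0 g (fst xz) - prim x0 g (snd xz))) \<partial>(lborel \<Otimes>\<^sub>M lborel))"
    unfolding fub rhs ..
  also have "\<dots> = 2 * Ep a b p (\<lambda>x. (prim x0 f x - Ep a b p (prim x0 f)) * (prim x0 g x - Ep a b p (prim x0 g)))"
    using cov_2d(2)[OF F G] unfolding r_def by (simp add: mult_ac)
  finally show ?thesis by simp
qed

end

context setting
begin

lemma KI:
  assumes f: "loc_int a b f" and Fl: "L2 a b p (prim x0 f)"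
    and fpos: "AE x in lborel. x \<in> S \<longrightarrow> 0 \<le> f x" and y: "y \<in> S"
  shows "(\<integral>\<^sup>+ x. ennreal (indicator S x * K x y * f x) \<partial>lborel) < \<infinity>"
proof -
  have fm[measurable]: "f \<in> borel_measurable borel" using f by (simp add: loc_int_def)
  have Fm[measurable]: "prim x0 f \<in> borel_measurable borel" using Fl by (simp add: L2_def)
  define r where "r z = indicator S z * p z" for z
  have r_meas[measurable]: "r \<in> borel_measurable borel" unfolding r_def by measurable
  have r_nn: "0 \<le> r z" for z unfolding r_def by (rule pS_nonneg)
  define \<Lambda> where "\<Lambda> x = integral\<^sup>L lborel (\<lambda>z. r z * \<bar>sg x y z\<bar>)" for x
  have \<Lambda>int: "integrable lborel (\<lambda>z. r z * \<bar>sg x y z\<bar>)" for x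
    unfolding r_def by (rule int_pS_bounded) (auto simp: abs_sg_le)
  have K_le: "K x y \<le> \<Lambda> x" for x
  proof (cases "x < y")
    case True
    have "\<Lambda> x = P x" unfolding \<Lambda>_def r_def P_eq using True
      by (intro Bochner_Integration.integral_cong) (auto simp: sg_def)
    moreover have "K x y \<le> P (min x y)" by (rule K_le1)
    ultimately show ?thesis using True by simp
  next
    case False
    have "\<Lambda> x = 1 - P x" unfolding \<Lambda>_def r_def one_minus_P using False
      by (intro Bochner_Integration.integral_cong) (auto simp: sg_def)
    moreover have "K x y \<le> 1 - P (max x y)" by (rule K_le2)
    ultimately show ?thesis using False by (simp add: max_def)
  qed
  have \<Lambda>_nn: "0 \<le> \<Lambda> x" for x using K_le[of x] K_nonneg[of x y] by simp
  have \<Lambda>_nnI: "ennreal (\<Lambda> x) = (\<integral>\<^sup>+ z. ennreal (r z * \<bar>sg x y z\<bar>) \<partial>lborel)" for x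
    unfolding \<Lambda>_def using \<Lambda>int[of x] r_nn by (subst nn_integral_eq_integral) auto
  have "(\<integral>\<^sup>+ x. ennreal (indicator S x * K x y * f x) \<partial>lborel)
      \<le> (\<integral>\<^sup>+ x. (\<integral>\<^sup>+ z. ennreal (indicator S x * f x) * ennreal (r z * \<bar>sg x y z\<bar>) \<partial>lborel) \<partial>lborel)"
  proof (intro nn_integral_mono)
    fix x
    have "ennreal (indicator S x * K x y * f x) \<le> ennreal (indicator S x * f x) * ennreal (\<Lambda> x)"
    proof (cases "0 \<le> indicator S x * f x")
      case True
      have "indicator S x * K x y * f x \<le> (indicator S x * f x) * \<Lambda> x"
        using mult_left_mono[OF K_le[of x] True] by (simp add: mult_ac)
      then show ?thesis using True \<Lambda>_nn[of x] by (simp add: ennreal_mult[symmetric])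
    next
      case False
      have "indicator S x * K x y * f x = K x y * (indicator S x * f x)" by simp
      also have "\<dots> \<le> 0"
      proof -
        have "indicator S x * f x \<le> 0" using False by linarith
        then show ?thesis by (rule mult_nonneg_nonpos[OF K_nonneg])
      qed
      finally have "indicator S x * K x y * f x \<le> 0" .
      then show ?thesis by (simp add: ennreal_neg)
    qed
    also have "\<dots> = (\<integral>\<^sup>+ z. ennreal (indicator S x * f x) * ennreal (r z * \<bar>sg x y z\<bar>) \<partial>lborel)"
      unfolding \<Lambda>_nnI by (rule nn_integral_cmult[symmetric]) measurable
    finally show "ennreal (indicator S x * K x y * f x) \<le> \<dots>" .
  qed
  also have "\<dots> = (\<integral>\<^sup>+ z. (\<integral>\<^sup>+ x. ennreal (indicator S x * f x) * ennreal (r z * \<bar>sg x y z\<bar>) \<partial>lborel) \<partial>lborel)"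
    by (rule lborel_pair.Fubini'[symmetric]) measurable
  also have "\<dots> \<le> (\<integral>\<^sup>+ z. ennreal (r z * (\<bar>prim x0 f y\<bar> + \<bar>prim x0 f z\<bar>)) \<partial>lborel)"
  proof (intro nn_integral_mono)
    fix z
    show "(\<integral>\<^sup>+ x. ennreal (indicator S x * f x) * ennreal (r z * \<bar>sg x y z\<bar>) \<partial>lborel)
        \<le> ennreal (r z * (\<bar>prim x0 f y\<bar> + \<bar>prim x0 f z\<bar>))"
    proof (cases "z \<in> S")
      case False
      then show ?thesis by (simp add: r_def)
    next
      case True
      define h where "h x = indicator S x * f x * sg x y z" for x
      note pd = prim_diff[OF f y True]
      have hint: "integrable lborel h" using pd(1) unfolding h_def .
      define \<sigma> where "\<sigma> = (if z \<le> y then 1 else -1 :: real)"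
      have AEh: "AE x in lborel. indicator S x * f x * \<bar>sg x y z\<bar> = \<sigma> * h x"
        using fpos by eventually_elim (auto simp: h_def \<sigma>_def sg_def indicator_def)
      have "(\<integral>\<^sup>+ x. ennreal (indicator S x * f x) * ennreal (r z * \<bar>sg x y z\<bar>) \<partial>lborel)
          = (\<integral>\<^sup>+ x. ennreal (r z) * ennreal (indicator S x * f x * \<bar>sg x y z\<bar>) \<partial>lborel)"
      proof (intro nn_integral_cong)
        fix x
        show "ennreal (indicator S x * f x) * ennreal (r z * \<bar>sg x y z\<bar>) =
            ennreal (r z) * ennreal (indicator S x * f x * \<bar>sg x y z\<bar>)"
        proof (cases "0 \<le> indicator S x * f x")
          case True
          have a: "0 \<le> r z * \<bar>sg x y z\<bar>" "0 \<le> indicator S x * f x * \<bar>sg x y z\<bar>"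
            using r_nn[of z] True by simp_all
          have "ennreal (indicator S x * f x) * ennreal (r z * \<bar>sg x y z\<bar>)
              = ennreal (indicator S x * f x * (r z * \<bar>sg x y z\<bar>))"
            using ennreal_mult[OF True a(1)] by simp
          also have "\<dots> = ennreal (r z * (indicator S x * f x * \<bar>sg x y z\<bar>))" by (simp add: mult_ac)
          also have "\<dots> = ennreal (r z) * ennreal (indicator S x * f x * \<bar>sg x y z\<bar>)"
            using ennreal_mult[OF r_nn a(2)] by simp
          finally show ?thesis .
        next
          case False
          then have "indicator S x * f x \<le> 0" by linarith
          then have "indicator S x * f x * \<bar>sg x y z\<bar> \<le> 0" by (rule mult_nonpos_nonneg) simp
          then show ?thesis using False by (simp add: ennreal_neg)
        qed
      qed
      also have "\<dots> = ennreal (r z) * (\<integral>\<^sup>+ x. ennreal (indicator S x * f x * \<bar>sg x y z\<bar>) \<partial>lborel)"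
        by (rule nn_integral_cmult) measurable
      also have "(\<integral>\<^sup>+ x. ennreal (indicator S x * f x * \<bar>sg x y z\<bar>) \<partial>lborel) = (\<integral>\<^sup>+ x. ennreal (\<sigma> * h x) \<partial>lborel)"
        using AEh by (intro nn_integral_cong_AE) (auto elim: eventually_mono)
      also have "\<dots> = ennreal (integral\<^sup>L lborel (\<lambda>x. \<sigma> * h x))"
      proof (rule nn_integral_eq_integral)
        show "integrable lborel (\<lambda>x. \<sigma> * h x)" using hint by simp
        have "AE x in lborel. 0 \<le> indicator S x * f x * \<bar>sg x y z\<bar>"
          using fpos by eventually_elim (auto simp: indicator_def)
        then show "AE x in lborel. 0 \<le> \<sigma> * h x" using AEh by eventually_elim simp
      qed
      also have "integral\<^sup>L lborel (\<lambda>x. \<sigma> * h x) = \<sigma> * (prim x0 f y - prim x0 f z)"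
        using pd(2) unfolding h_def by simp
      finally have eq: "(\<integral>\<^sup>+ x. ennreal (indicator S x * f x) * ennreal (r z * \<bar>sg x y z\<bar>) \<partial>lborel)
          = ennreal (r z) * ennreal (\<sigma> * (prim x0 f y - prim x0 f z))" .
      have "\<sigma> * (prim x0 f y - prim x0 f z) \<le> \<bar>prim x0 f y\<bar> + \<bar>prim x0 f z\<bar>"
        by (auto simp: \<sigma>_def)
      then have "ennreal (r z) * ennreal (\<sigma> * (prim x0 f y - prim x0 f z)) \<le> ennreal (r z) * ennreal (\<bar>prim x0 f y\<bar> + \<bar>prim x0 f z\<bar>)"
        by (intro mult_left_mono ennreal_leI) auto
      also have "\<dots> = ennreal (r z * (\<bar>prim x0 f y\<bar> + \<bar>prim x0 f z\<bar>))"
        using r_nn[of z] by (simp add: ennreal_mult)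
      finally show ?thesis unfolding eq .
    qed
  qed
  also have "\<dots> < \<infinity>"
  proof -
    have i1: "integrable lborel (\<lambda>z. prim x0 f z * (indicator S z * p z))" by (rule L2p_lin_int[OF Fl])
    have "integrable lborel (\<lambda>z. \<bar>prim x0 f y\<bar> * (indicator S z * p z) + \<bar>prim x0 f z * (indicator S z * p z)\<bar>)"
      using i1 p_int by (intro Bochner_Integration.integrable_add integrable_mult_right integrable_abs)
    moreover have "(\<lambda>z. \<bar>prim x0 f y\<bar> * (indicator S z * p z) + \<bar>prim x0 f z * (indicator S z * p z)\<bar>)
        = (\<lambda>z. r z * (\<bar>prim x0 f y\<bar> + \<bar>prim x0 f z\<bar>))"
    proof (rule ext)
      fix z
      have "\<bar>indicator S z * p z\<bar> = indicator S z * p z" by (rule abs_of_nonneg[OF pS_nonneg])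
      then show "\<bar>prim x0 f y\<bar> * (indicator S z * p z) + \<bar>prim x0 f z * (indicator S z * p z)\<bar>
        = r z * (\<bar>prim x0 f y\<bar> + \<bar>prim x0 f z\<bar>)"
        by (simp only: abs_mult r_def) (simp add: algebra_simps)
    qed
    ultimately have ii: "integrable lborel (\<lambda>z. r z * (\<bar>prim x0 f y\<bar> + \<bar>prim x0 f z\<bar>))" by simp
    have "(\<integral>\<^sup>+ z. ennreal (r z * (\<bar>prim x0 f y\<bar> + \<bar>prim x0 f z\<bar>)) \<partial>lborel)
        = ennreal (integral\<^sup>L lborel (\<lambda>z. r z * (\<bar>prim x0 f y\<bar> + \<bar>prim x0 f z\<bar>)))"
      using ii r_nn by (intro nn_integral_eq_integral) auto
    then show ?thesis by simp
  qed
  finally show ?thesis .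
qed

end

context setting
begin

definition Nw :: "(real \<Rightarrow> real) \<Rightarrow> real" where
  "Nw h = integral\<^sup>L lborel (\<lambda>x. (h x)\<^sup>2 * (indicator S x * (p x * w x)))"

lemma AE_q_pos: "AE x in lborel. x \<in> S \<longrightarrow> 0 < p x * w x"
  using AE_p_pos AE_w_pos by eventually_elim auto

lemma L2w_int: "L2 a b (\<lambda>x. p x * w x) h \<Longrightarrow> integrable lborel (\<lambda>x. (h x)\<^sup>2 * (indicator S x * (p x * w x)))"
  by (simp add: L2_def set_integrable_def mult_ac)

lemma L2w_meas: "L2 a b (\<lambda>x. p x * w x) h \<Longrightarrow> h \<in> borel_measurable borel"
  by (simp add: L2_def)

lemma schur_half:
  assumes em[measurable]: "e \<in> borel_measurable borel" and epos: "AE x in lborel. x \<in> S \<longrightarrow> 0 < e x"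
    and k: "0 \<le> k"
    and eig: "AE y in lborel. y \<in> S \<longrightarrow> (\<integral>\<^sup>+ x. ennreal (indicator S x * K x y * e x) \<partial>lborel) = ennreal (k * e y * (p y * w y))"
    and h: "L2 a b (\<lambda>x. p x * w x) h"
  shows "(\<integral>\<^sup>+ t. (\<integral>\<^sup>+ s. ennreal (1/2 * indicator S t * (h t)\<^sup>2 / e t * (indicator S s * K s t * e s)) \<partial>lborel) \<partial>lborel)
       = ennreal (k / 2 * Nw h)"
proof -
  have hm[measurable]: "h \<in> borel_measurable borel" by (rule L2w_meas[OF h])
  have "(\<integral>\<^sup>+ t. (\<integral>\<^sup>+ s. ennreal (1/2 * indicator S t * (h t)\<^sup>2 / e t * (indicator S s * K s t * e s)) \<partial>lborel) \<partial>lborel)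
      = (\<integral>\<^sup>+ t. ennreal (k / 2 * ((h t)\<^sup>2 * (indicator S t * (p t * w t)))) \<partial>lborel)"
  proof (intro nn_integral_cong_AE)
    show "AE t in lborel. (\<integral>\<^sup>+ s. ennreal (1/2 * indicator S t * (h t)\<^sup>2 / e t * (indicator S s * K s t * e s)) \<partial>lborel)
       = ennreal (k / 2 * ((h t)\<^sup>2 * (indicator S t * (p t * w t))))"
      using epos eig AE_q_pos
    proof eventually_elim
      case (elim t)
      show ?case
      proof (cases "t \<in> S")
        case False
        then show ?thesis by simp
      next
        case True
        have c0: "0 \<le> 1/2 * indicator S t * (h t)\<^sup>2 / e t" using True elim by simp
        have "(\<integral>\<^sup>+ s. ennreal (1/2 * indicator S t * (h t)\<^sup>2 / e t * (indicator S s * K s t * e s)) \<partial>lborel)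
           = (\<integral>\<^sup>+ s. ennreal (1/2 * indicator S t * (h t)\<^sup>2 / e t) * ennreal (indicator S s * K s t * e s) \<partial>lborel)"
          by (intro nn_integral_cong) (rule ennreal_mult'[OF c0])
        also have "\<dots> = ennreal (1/2 * indicator S t * (h t)\<^sup>2 / e t) * (\<integral>\<^sup>+ s. ennreal (indicator S s * K s t * e s) \<partial>lborel)"
          by (rule nn_integral_cmult) measurable
        also have "\<dots> = ennreal (1/2 * indicator S t * (h t)\<^sup>2 / e t) * ennreal (k * e t * (p t * w t))"
          using elim True by simp
        also have "\<dots> = ennreal (1/2 * indicator S t * (h t)\<^sup>2 / e t * (k * e t * (p t * w t)))"
          by (rule ennreal_mult'[OF c0, symmetric])
        also have "1/2 * indicator S t * (h t)\<^sup>2 / e t * (k * e t * (p t * w t)) = k / 2 * ((h t)\<^sup>2 * (indicator S t * (p t * w t)))"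
          using elim True by (simp add: field_simps)
        finally show ?thesis .
      qed
    qed
  qed
  also have "\<dots> = ennreal (integral\<^sup>L lborel (\<lambda>t. k / 2 * ((h t)\<^sup>2 * (indicator S t * (p t * w t)))))"
  proof (rule nn_integral_eq_integral)
    show "integrable lborel (\<lambda>t. k / 2 * ((h t)\<^sup>2 * (indicator S t * (p t * w t))))"
      using L2w_int[OF h] by simp
    show "AE t in lborel. 0 \<le> k / 2 * ((h t)\<^sup>2 * (indicator S t * (p t * w t)))"
      using AE_q_pos by eventually_elim (use k in \<open>auto simp: indicator_def\<close>)
  qed
  also have "\<dots> = ennreal (k / 2 * Nw h)" by (simp add: Nw_def)
  finally show ?thesis .
qed

lemma amgm_aux:
  fixes A B u v :: real
  assumes "0 < u" "0 < v"
  shows "A * B \<le> 1/2 * A\<^sup>2 * v / u + 1/2 * B\<^sup>2 * u / v"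
proof -
  have "1/2 * A\<^sup>2 * v / u + 1/2 * B\<^sup>2 * u / v - A * B = (A * v - B * u)\<^sup>2 / (2 * u * v)"
    using assms by (simp add: field_simps power2_eq_square)
  moreover have "0 \<le> (A * v - B * u)\<^sup>2 / (2 * u * v)" using assms by simp
  ultimately show ?thesis by linarith
qed

lemma schur:
  assumes em[measurable]: "e \<in> borel_measurable borel" and epos: "AE x in lborel. x \<in> S \<longrightarrow> 0 < e x"
    and k: "0 \<le> k"
    and eig: "AE y in lborel. y \<in> S \<longrightarrow> (\<integral>\<^sup>+ x. ennreal (indicator S x * K x y * e x) \<partial>lborel) = ennreal (k * e y * (p y * w y))"
    and f: "L2 a b (\<lambda>x. p x * w x) f" and g: "L2 a b (\<lambda>x. p x * w x) g"
  shows "(\<integral>\<^sup>+ \<omega>. ennreal (indicator S (fst \<omega>) * indicator S (snd \<omega>) * K (fst \<omega>) (snd \<omega>) * \<bar>f (fst \<omega>)\<bar> * \<bar>g (snd \<omega>)\<bar>) \<partial>(lborel \<Otimes>\<^sub>M lborel))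
     \<le> ennreal (k / 2 * Nw f) + ennreal (k / 2 * Nw g)"
proof -
  have fm[measurable]: "f \<in> borel_measurable borel" by (rule L2w_meas[OF f])
  have gm[measurable]: "g \<in> borel_measurable borel" by (rule L2w_meas[OF g])
  define Y1 where "Y1 t s = ennreal (1/2 * indicator S t * (f t)\<^sup>2 / e t * (indicator S s * K s t * e s))" for t s
  define Y2 where "Y2 t s = ennreal (1/2 * indicator S s * (g s)\<^sup>2 / e s * (indicator S t * K t s * e t))" for t s
  have Y1m[measurable]: "(\<lambda>(t, s). Y1 t s) \<in> borel_measurable (lborel \<Otimes>\<^sub>M lborel)" unfolding Y1_def by measurable
  have Y2m[measurable]: "(\<lambda>(t, s). Y2 t s) \<in> borel_measurable (lborel \<Otimes>\<^sub>M lborel)" unfolding Y2_def by measurable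
  have "(\<integral>\<^sup>+ \<omega>. ennreal (indicator S (fst \<omega>) * indicator S (snd \<omega>) * K (fst \<omega>) (snd \<omega>) * \<bar>f (fst \<omega>)\<bar> * \<bar>g (snd \<omega>)\<bar>) \<partial>(lborel \<Otimes>\<^sub>M lborel))
     = (\<integral>\<^sup>+ t. (\<integral>\<^sup>+ s. ennreal (indicator S t * indicator S s * K t s * \<bar>f t\<bar> * \<bar>g s\<bar>) \<partial>lborel) \<partial>lborel)"
    using lborel.nn_integral_fst[of "\<lambda>\<omega>. ennreal (indicator S (fst \<omega>) * indicator S (snd \<omega>) * K (fst \<omega>) (snd \<omega>) * \<bar>f (fst \<omega>)\<bar> * \<bar>g (snd \<omega>)\<bar>)" lborel]
    by simp
  also have "\<dots> \<le> (\<integral>\<^sup>+ t. (\<integral>\<^sup>+ s. Y1 t s + Y2 t s \<partial>lborel) \<partial>lborel)"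
  proof (intro nn_integral_mono_AE)
    show "AE t in lborel. (\<integral>\<^sup>+ s. ennreal (indicator S t * indicator S s * K t s * \<bar>f t\<bar> * \<bar>g s\<bar>) \<partial>lborel)
        \<le> (\<integral>\<^sup>+ s. Y1 t s + Y2 t s \<partial>lborel)"
      using epos
    proof eventually_elim
      case (elim t)
      note et_fact = elim
      show ?case
      proof (intro nn_integral_mono_AE)
        show "AE s in lborel. ennreal (indicator S t * indicator S s * K t s * \<bar>f t\<bar> * \<bar>g s\<bar>) \<le> Y1 t s + Y2 t s"
          using epos
        proof eventually_elim
          case (elim s)
          show ?case
          proof (cases "t \<in> S \<and> s \<in> S")
            case False
            then show ?thesis by auto
          next
            case True
            have et: "0 < e t" and es: "0 < e s" using et_fact elim True by auto
            have y1: "0 \<le> 1/2 * indicator S t * (f t)\<^sup>2 / e t * (indicator S s * K s t * e s)"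
              using et es K_nonneg[of s t] by simp
            have y2: "0 \<le> 1/2 * indicator S s * (g s)\<^sup>2 / e s * (indicator S t * K t s * e t)"
              using et es K_nonneg[of t s] by simp
            have "\<bar>f t\<bar> * \<bar>g s\<bar> \<le> 1/2 * \<bar>f t\<bar>\<^sup>2 * e s / e t + 1/2 * \<bar>g s\<bar>\<^sup>2 * e t / e s"
              by (rule amgm_aux[OF et es])
            then have "K t s * (\<bar>f t\<bar> * \<bar>g s\<bar>) \<le> K t s * (1/2 * \<bar>f t\<bar>\<^sup>2 * e s / e t + 1/2 * \<bar>g s\<bar>\<^sup>2 * e t / e s)"
              by (rule mult_left_mono[OF _ K_nonneg])
            then have "indicator S t * indicator S s * K t s * \<bar>f t\<bar> * \<bar>g s\<bar>
                \<le> 1/2 * indicator S t * (f t)\<^sup>2 / e t * (indicator S s * K s t * e s)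
                 + 1/2 * indicator S s * (g s)\<^sup>2 / e s * (indicator S t * K t s * e t)"
              using True K_sym[of s t] by (simp add: algebra_simps)
            then have "ennreal (indicator S t * indicator S s * K t s * \<bar>f t\<bar> * \<bar>g s\<bar>)
                \<le> ennreal (1/2 * indicator S t * (f t)\<^sup>2 / e t * (indicator S s * K s t * e s)
                 + 1/2 * indicator S s * (g s)\<^sup>2 / e s * (indicator S t * K t s * e t))"
              by (rule ennreal_leI)
            also have "\<dots> = Y1 t s + Y2 t s" unfolding Y1_def Y2_def using y1 y2 by (rule ennreal_plus)
            finally show ?thesis .
          qed
        qed
      qed
    qed
  qed
  also have "\<dots> = (\<integral>\<^sup>+ t. (\<integral>\<^sup>+ s. Y1 t s \<partial>lborel) + (\<integral>\<^sup>+ s. Y2 t s \<partial>lborel) \<partial>lborel)"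
    by (intro nn_integral_cong nn_integral_add) (simp_all add: Y1_def Y2_def)
  also have "\<dots> = (\<integral>\<^sup>+ t. (\<integral>\<^sup>+ s. Y1 t s \<partial>lborel) \<partial>lborel) + (\<integral>\<^sup>+ t. (\<integral>\<^sup>+ s. Y2 t s \<partial>lborel) \<partial>lborel)"
    by (rule nn_integral_add) measurable
  also have "(\<integral>\<^sup>+ t. (\<integral>\<^sup>+ s. Y2 t s \<partial>lborel) \<partial>lborel) = (\<integral>\<^sup>+ s. (\<integral>\<^sup>+ t. Y2 t s \<partial>lborel) \<partial>lborel)"
    by (rule lborel_pair.Fubini'[symmetric]) measurable
  also have "(\<integral>\<^sup>+ t. (\<integral>\<^sup>+ s. Y1 t s \<partial>lborel) \<partial>lborel) = ennreal (k / 2 * Nw f)"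
    unfolding Y1_def by (rule schur_half[OF em epos k eig f])
  also have "(\<integral>\<^sup>+ s. (\<integral>\<^sup>+ t. Y2 t s \<partial>lborel) \<partial>lborel) = ennreal (k / 2 * Nw g)"
    unfolding Y2_def by (rule schur_half[OF em epos k eig g])
  finally show ?thesis .
qed

end

locale setting2 = setting +
  fixes e1 :: "real \<Rightarrow> real"
  assumes hyp1: "H1 a b p w" and cpt: "compact_Ltil a b p w x0" and e1_E2: "e1 \<in> E2 a b p w x0"
    and e1_eig: "AE x in lborel. x \<in> Ivl a b \<longrightarrow> Ltil a b p w e1 x = Cpw a b p w * e1 x"
    and e1_pos: "AE x in lborel. x \<in> Ivl a b \<longrightarrow> 0 < e1 x"
begin

abbreviation "\<kappa> \<equiv> Cpw a b p w"

lemma kappa_nonneg: "0 \<le> \<kappa>"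
  unfolding Cpw_def using hyp1 unfolding H1_def
  by (intro cInf_greatest) (auto simp: poincare_consts_def)

lemma E2D:
  assumes "f \<in> E2 a b p w x0"
  shows "L2 a b (\<lambda>x. p x * w x) f" "loc_int a b f" "L2 a b p (prim x0 f)"
  using assms by (auto simp: E2_def)

lemma E2_meas: "f \<in> E2 a b p w x0 \<Longrightarrow> f \<in> borel_measurable borel"
  using E2D(1) L2w_meas by blast

lemma e1_meas[measurable]: "e1 \<in> borel_measurable borel"
  by (rule E2_meas[OF e1_E2])

lemma Ltil_eq:
  assumes "p y * w y \<noteq> 0"
  shows "Ltil a b p w f y * (p y * w y) = integral\<^sup>L lborel (\<lambda>x. indicator S x * K x y * f x)"
  using assms unfolding Ltil_def set_lebesgue_integral_def
  by (simp add: K_sym[of y] mult_ac)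

lemma eig_nn:
  "AE y in lborel. y \<in> S \<longrightarrow> (\<integral>\<^sup>+ x. ennreal (indicator S x * K x y * e1 x) \<partial>lborel) = ennreal (\<kappa> * e1 y * (p y * w y))"
  using e1_eig AE_q_pos
proof eventually_elim
  case (elim y)
  show ?case
  proof
    assume y: "y \<in> S"
    have fin: "(\<integral>\<^sup>+ x. ennreal (indicator S x * K x y * e1 x) \<partial>lborel) < \<infinity>"
      by (rule KI[OF E2D(2)[OF e1_E2] E2D(3)[OF e1_E2] _ y]) (use e1_pos in \<open>auto elim: eventually_mono\<close>)
    have nn: "AE x in lborel. 0 \<le> indicator S x * K x y * e1 x"
      using e1_pos
    proof eventually_elim
      case (elim x)
      show ?case
      proof (cases "x \<in> S")
        case True
        then have "0 \<le> e1 x" using elim by simp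
        then have "0 \<le> K x y * e1 x" by (rule mult_nonneg_nonneg[OF K_nonneg])
        then show ?thesis using True by simp
      qed simp
    qed
    have int: "integrable lborel (\<lambda>x. indicator S x * K x y * e1 x)"
      by (rule integrableI_nonneg[OF _ nn fin]) measurable
    have "(\<integral>\<^sup>+ x. ennreal (indicator S x * K x y * e1 x) \<partial>lborel) = ennreal (integral\<^sup>L lborel (\<lambda>x. indicator S x * K x y * e1 x))"
      by (rule nn_integral_eq_integral[OF int nn])
    also have "integral\<^sup>L lborel (\<lambda>x. indicator S x * K x y * e1 x) = Ltil a b p w e1 y * (p y * w y)"
    proof -
      have "0 < p y * w y" using elim y by simp
      then have "p y * w y \<noteq> 0" by linarith
      then show ?thesis by (rule Ltil_eq[symmetric])
    qed
    also have "\<dots> = \<kappa> * e1 y * (p y * w y)" using elim y by simp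
    finally show "(\<integral>\<^sup>+ x. ennreal (indicator S x * K x y * e1 x) \<partial>lborel) = ennreal (\<kappa> * e1 y * (p y * w y))" .
  qed
qed

lemma schur_E2:
  assumes "f \<in> E2 a b p w x0" "g \<in> E2 a b p w x0"
  shows "(\<integral>\<^sup>+ \<omega>. ennreal (indicator S (fst \<omega>) * indicator S (snd \<omega>) * K (fst \<omega>) (snd \<omega>) * \<bar>f (fst \<omega>)\<bar> * \<bar>g (snd \<omega>)\<bar>) \<partial>(lborel \<Otimes>\<^sub>M lborel))
     \<le> ennreal (\<kappa> / 2 * Nw f) + ennreal (\<kappa> / 2 * Nw g)"
  by (rule schur[OF e1_meas e1_pos kappa_nonneg eig_nn E2D(1)[OF assms(1)] E2D(1)[OF assms(2)]])

lemma fin_E2: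
  assumes "f \<in> E2 a b p w x0" "g \<in> E2 a b p w x0"
  shows "(\<integral>\<^sup>+ \<omega>. ennreal (indicator S (fst \<omega>) * indicator S (snd \<omega>) * K (fst \<omega>) (snd \<omega>) * \<bar>f (fst \<omega>)\<bar> * \<bar>g (snd \<omega>)\<bar>) \<partial>(lborel \<Otimes>\<^sub>M lborel)) < \<infinity>"
  using schur_E2[OF assms] by (rule le_less_trans) simp

abbreviation "Bi f g \<equiv> integral\<^sup>L (lborel \<Otimes>\<^sub>M lborel) (\<lambda>\<omega>. indicator S (fst \<omega>) * indicator S (snd \<omega>) * K (fst \<omega>) (snd \<omega>) * f (fst \<omega>) * g (snd \<omega>))"

abbreviation "Cov F G \<equiv> Ep a b p (\<lambda>x. (F x - Ep a b p F) * (G x - Ep a b p G))"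

lemma Bi_integrable:
  assumes f: "f \<in> E2 a b p w x0" and g: "g \<in> E2 a b p w x0"
  shows "integrable (lborel \<Otimes>\<^sub>M lborel) (\<lambda>\<omega>. indicator S (fst \<omega>) * indicator S (snd \<omega>) * K (fst \<omega>) (snd \<omega>) * f (fst \<omega>) * g (snd \<omega>))"
proof (subst integrable_iff_bounded, intro conjI)
  have [measurable]: "f \<in> borel_measurable borel" "g \<in> borel_measurable borel" using E2_meas f g by auto
  show "(\<lambda>\<omega>. indicator S (fst \<omega>) * indicator S (snd \<omega>) * K (fst \<omega>) (snd \<omega>) * f (fst \<omega>) * g (snd \<omega>)) \<in> borel_measurable (lborel \<Otimes>\<^sub>M lborel)"
    by measurable
  have "(\<integral>\<^sup>+ \<omega>. ennreal (norm (indicator S (fst \<omega>) * indicator S (snd \<omega>) * K (fst \<omega>) (snd \<omega>) * f (fst \<omega>) * g (snd \<omega>))) \<partial>(lborel \<Otimes>\<^sub>M lborel))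
      = (\<integral>\<^sup>+ \<omega>. ennreal (indicator S (fst \<omega>) * indicator S (snd \<omega>) * K (fst \<omega>) (snd \<omega>) * \<bar>f (fst \<omega>)\<bar> * \<bar>g (snd \<omega>)\<bar>) \<partial>(lborel \<Otimes>\<^sub>M lborel))"
    using K_nonneg by (intro nn_integral_cong) (simp add: abs_mult)
  then show "(\<integral>\<^sup>+ \<omega>. ennreal (norm (indicator S (fst \<omega>) * indicator S (snd \<omega>) * K (fst \<omega>) (snd \<omega>) * f (fst \<omega>) * g (snd \<omega>))) \<partial>(lborel \<Otimes>\<^sub>M lborel)) < \<infinity>"
    using fin_E2[OF f g] by simp
qed

lemma cov_Bi:
  assumes f: "f \<in> E2 a b p w x0" and g: "g \<in> E2 a b p w x0"
  shows "Cov (prim x0 f) (prim x0 g) = Bi f g"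
  by (rule hoeffding[OF E2D(2)[OF f] E2D(2)[OF g] E2D(3)[OF f] E2D(3)[OF g] fin_E2[OF f g]])

definition ip :: "(real \<Rightarrow> real) \<Rightarrow> (real \<Rightarrow> real) \<Rightarrow> real" where
  "ip u v = integral\<^sup>L lborel (\<lambda>x. u x * v x * (indicator S x * (p x * w x)))"

lemma ip_Ltil:
  assumes f: "f \<in> E2 a b p w x0" and g: "g \<in> E2 a b p w x0"
  shows "ip (Ltil a b p w f) g = Cov (prim x0 f) (prim x0 g)"
proof -
  note int = Bi_integrable[OF f g]
  have int': "integrable (lborel \<Otimes>\<^sub>M lborel) (\<lambda>(t, s). indicator S t * indicator S s * K t s * f t * g s)"
    using int by (simp add: case_prod_beta')
  have "Bi f g = (\<integral>s. (\<integral>t. indicator S t * indicator S s * K t s * f t * g s \<partial>lborel) \<partial>lborel)"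
    using lborel_pair.integral_snd[OF int'] by (simp add: case_prod_beta')
  also have "\<dots> = (\<integral>s. (\<integral>t. indicator S t * K t s * f t \<partial>lborel) * (indicator S s * g s) \<partial>lborel)"
    by (intro Bochner_Integration.integral_cong refl, subst integral_mult_left_zero[symmetric])
       (intro Bochner_Integration.integral_cong, auto simp: mult_ac)
  also have "\<dots> = ip (Ltil a b p w f) g"
    unfolding ip_def
  proof (intro integral_cong_AE)
    show "AE s in lborel. (\<integral>t. indicator S t * K t s * f t \<partial>lborel) * (indicator S s * g s)
        = Ltil a b p w f s * g s * (indicator S s * (p s * w s))"
      using AE_q_pos
    proof eventually_elim
      case (elim s)
      show ?case
      proof (cases "s \<in> S")
        case True
        then have "0 < p s * w s" using elim by simp
        then have "p s * w s \<noteq> 0" by linarith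
        from Ltil_eq[OF this, of f] True show ?thesis by (simp add: mult_ac)
      qed simp
    qed
  qed (use E2_meas[OF f] E2_meas[OF g] E2_meas[of "Ltil a b p w f"] cpt f in \<open>auto simp: compact_Ltil_def\<close>)
  finally show ?thesis using cov_Bi[OF f g] by simp
qed

end

lemma abstract_lim:
  fixes N V :: "nat \<Rightarrow> real" and k c :: real
  assumes k: "k \<ge> 0" and c: "c \<noteq> 0"
    and V0: "\<And>n. 0 \<le> V n" and VN: "\<And>n. V n \<le> k * N n"
    and NV: "\<And>n. (N (Suc n))\<^sup>2 \<le> V n * V (Suc n)"
    and NN: "\<And>n. (N (Suc n))\<^sup>2 \<le> N n * N (Suc (Suc n))"
    and low: "\<And>n. (k ^ n * c)\<^sup>2 \<le> N n"
  shows "(\<lambda>n. V n / N n) \<longlonglongrightarrow> k"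
proof (cases "k = 0")
  case True
  then have "\<And>n. V n = 0" using V0 VN by (metis antisym mult_zero_left)
  then show ?thesis using True by simp
next
  case False
  then have kp: "k > 0" using k by simp
  have Npos: "N n > 0" for n
  proof -
    have "(k ^ n * c)\<^sup>2 > 0" using kp c by simp
    then show ?thesis using low[of n] by linarith
  qed
  have NV2: "N (Suc n) \<le> k * V n" for n
  proof -
    have "(N (Suc n))\<^sup>2 \<le> V n * (k * N (Suc n))"
      using NV[of n] VN[of "Suc n"] V0[of n] mult_left_mono order_trans by blast
    then have "N (Suc n) * N (Suc n) \<le> (k * V n) * N (Suc n)"
      by (simp add: power2_eq_square algebra_simps)
    then show ?thesis using Npos[of "Suc n"] by simp
  qed
  define s where "s n = N (Suc n) / N n" for n
  have s_mono: "incseq s"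
  proof (rule incseq_SucI)
    fix n
    have "N (Suc n) * N (Suc n) \<le> N n * N (Suc (Suc n))" using NN[of n] by (simp add: power2_eq_square)
    then show "s n \<le> s (Suc n)" unfolding s_def using Npos[of n] Npos[of "Suc n"]
      by (simp add: divide_simps) (simp add: algebra_simps)
  qed
  have s_bd: "s n \<le> k\<^sup>2" for n
  proof -
    have "N (Suc n) \<le> k * (k * N n)" using NV2[of n] VN[of n] kp
      by (meson mult_left_mono less_imp_le order_trans)
    then show ?thesis unfolding s_def using Npos[of n] by (simp add: divide_simps power2_eq_square)
  qed
  have s_pos: "s n > 0" for n unfolding s_def using Npos by simp
  obtain L where sL: "s \<longlonglongrightarrow> L" using incseq_convergent[OF s_mono, of "k\<^sup>2"] s_bd by (metis)
  have sleL: "s n \<le> L" for n using incseq_le[OF s_mono sL] by simp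
  have Lle: "L \<le> k\<^sup>2" using sL s_bd by (intro LIMSEQ_le_const2) auto
  have Lpos: "L > 0" using sleL[of 0] s_pos[of 0] by simp
  have Nup: "N n \<le> N 0 * L ^ n" for n
  proof (induction n)
    case 0 then show ?case by simp
  next
    case (Suc n)
    have "N (Suc n) = s n * N n" unfolding s_def using Npos[of n] by simp
    also have "\<dots> \<le> L * N n" using sleL[of n] Npos[of n] by (simp add: mult_right_mono)
    also have "\<dots> \<le> L * (N 0 * L ^ n)" using Suc Lpos by simp
    finally show ?case by (simp add: algebra_simps)
  qed
  have LK: "L = k\<^sup>2"
  proof (rule ccontr)
    assume "L \<noteq> k\<^sup>2"
    then have lt: "L / k\<^sup>2 < 1" using Lle kp by simp
    have ge: "c\<^sup>2 / N 0 \<le> (L / k\<^sup>2) ^ n" for n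
    proof -
      have "(k\<^sup>2) ^ n * c\<^sup>2 \<le> N 0 * L ^ n" using low[of n] Nup[of n]
        by (simp add: power_mult_distrib power_even_eq[symmetric] power_mult[symmetric] mult.commute)
      then show ?thesis using kp Npos[of 0]
        by (simp add: divide_simps power_divide mult.commute)
    qed
    have "(\<lambda>n. (L / k\<^sup>2) ^ n) \<longlonglongrightarrow> 0"
      using lt Lpos kp by (intro LIMSEQ_power_zero) simp
    moreover have "c\<^sup>2 / N 0 > 0" using c Npos[of 0] by simp
    ultimately show False using ge
      by (metis (no_types, lifting) LIMSEQ_le_const order_less_le_trans less_irrefl)
  qed
  have lower: "s n / k \<le> V n / N n" for n
    using NV2[of n] kp Npos[of n] unfolding s_def by (simp add: divide_simps mult.commute)
  have upper: "V n / N n \<le> k" for n using VN[of n] Npos[of n] by (simp add: divide_simps mult.commute)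
  have "(\<lambda>n. s n / k) \<longlonglongrightarrow> k\<^sup>2 / k" using sL LK kp by (intro tendsto_divide) auto
  then have lo: "(\<lambda>n. s n / k) \<longlonglongrightarrow> k" using kp by (simp add: power2_eq_square)
  show ?thesis
    by (rule tendsto_sandwich[OF _ _ lo tendsto_const]) (simp_all add: lower upper)
qed


context setting2
begin

lemma Ltil_E2: "f \<in> E2 a b p w x0 \<Longrightarrow> Ltil a b p w f \<in> E2 a b p w x0"
  using cpt by (simp add: compact_Ltil_def)

lemma iter_E2: "g \<in> E2 a b p w x0 \<Longrightarrow> (Ltil a b p w ^^ n) g \<in> E2 a b p w x0"
  by (induction n) (auto intro: Ltil_E2)

lemma Cov_nonneg: "0 \<le> Cov F F"
  unfolding Ep_eq
  by (intro integral_nonneg_AE AE_I2) (rule mult_nonneg_nonneg[OF zero_le_square pS_nonneg])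

lemma Cov_sym: "Cov F G = Cov G F"
  by (simp add: mult.commute)

lemma L2p_shift_int:
  assumes F: "L2 a b p F"
  shows "integrable lborel (\<lambda>x. (F x - c)\<^sup>2 * (indicator S x * p x))"
proof -
  have "integrable lborel (\<lambda>x. (F x)\<^sup>2 * (indicator S x * p x) - 2 * c * (F x * (indicator S x * p x)) + c\<^sup>2 * (indicator S x * p x))"
    using L2p_int[OF F] L2p_lin_int[OF F] p_int by auto
  moreover have "(\<lambda>x. (F x)\<^sup>2 * (indicator S x * p x) - 2 * c * (F x * (indicator S x * p x)) + c\<^sup>2 * (indicator S x * p x))
     = (\<lambda>x. (F x - c)\<^sup>2 * (indicator S x * p x))"
    by (auto simp: fun_eq_iff power2_eq_square algebra_simps)
  ultimately show ?thesis by simp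
qed

lemma Cov_CS:
  assumes F: "L2 a b p F" and G: "L2 a b p G"
  shows "(Cov F G)\<^sup>2 \<le> Cov F F * Cov G G"
proof -
  have [measurable]: "F \<in> borel_measurable borel" "G \<in> borel_measurable borel"
    using L2p_meas F G by auto
  have "(\<integral>x. (F x - Ep a b p F) * (G x - Ep a b p G) * (indicator S x * p x) \<partial>lborel)\<^sup>2
     \<le> (\<integral>x. (F x - Ep a b p F)\<^sup>2 * (indicator S x * p x) \<partial>lborel) * (\<integral>x. (G x - Ep a b p G)\<^sup>2 * (indicator S x * p x) \<partial>lborel)"
    by (rule CS_ineq[where M=lborel]) (use L2p_shift_int[OF F] L2p_shift_int[OF G] rho_nonneg_AE in auto)
  then show ?thesis unfolding Ep_eq[of "\<lambda>x. (F x - Ep a b p F) * (G x - Ep a b p G)"]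
    Ep_eq[of "\<lambda>x. (F x - Ep a b p F) * (F x - Ep a b p F)"] Ep_eq[of "\<lambda>x. (G x - Ep a b p G) * (G x - Ep a b p G)"]
    by (simp add: power2_eq_square)
qed

lemma Nw_nonneg: "0 \<le> Nw h"
  unfolding Nw_def using AE_q_pos
  by (intro integral_nonneg_AE) (auto elim!: eventually_mono simp: indicator_def)

lemma V_le:
  assumes f: "f \<in> E2 a b p w x0"
  shows "Cov (prim x0 f) (prim x0 f) \<le> \<kappa> * Nw f"
proof -
  have "ennreal (norm (Bi f f)) \<le> (\<integral>\<^sup>+ \<omega>. norm (indicator S (fst \<omega>) * indicator S (snd \<omega>) * K (fst \<omega>) (snd \<omega>) * f (fst \<omega>) * f (snd \<omega>)) \<partial>(lborel \<Otimes>\<^sub>M lborel))"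
    by (rule integral_norm_bound_ennreal[OF Bi_integrable[OF f f]])
  also have "\<dots> = (\<integral>\<^sup>+ \<omega>. ennreal (indicator S (fst \<omega>) * indicator S (snd \<omega>) * K (fst \<omega>) (snd \<omega>) * \<bar>f (fst \<omega>)\<bar> * \<bar>f (snd \<omega>)\<bar>) \<partial>(lborel \<Otimes>\<^sub>M lborel))"
    using K_nonneg by (intro nn_integral_cong) (simp add: abs_mult)
  also have "\<dots> \<le> ennreal (\<kappa> / 2 * Nw f) + ennreal (\<kappa> / 2 * Nw f)" by (rule schur_E2[OF f f])
  also have "\<dots> = ennreal (\<kappa> * Nw f)"
    using kappa_nonneg Nw_nonneg[of f] by (simp add: ennreal_plus[symmetric])
  finally have "norm (Bi f f) \<le> \<kappa> * Nw f"
    using kappa_nonneg Nw_nonneg[of f] by (simp add: ennreal_le_iff)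
  then show ?thesis using cov_Bi[OF f f] by simp
qed

lemma ip_sym: "ip u v = ip v u"
  unfolding ip_def by (simp add: mult.commute)

lemma Nw_ip: "Nw u = ip u u"
  unfolding Nw_def ip_def by (simp add: power2_eq_square)

lemma ip_CS:
  assumes u: "L2 a b (\<lambda>x. p x * w x) u" and v: "L2 a b (\<lambda>x. p x * w x) v"
  shows "(ip u v)\<^sup>2 \<le> Nw u * Nw v"
  unfolding ip_def Nw_def
  by (rule CS_ineq[where M=lborel])
     (use L2w_meas[OF u] L2w_meas[OF v] L2w_int[OF u] L2w_int[OF v] AE_q_pos
       in \<open>auto elim!: eventually_mono simp: indicator_def\<close>)

lemma ip_e1:
  assumes h: "h \<in> E2 a b p w x0"
  shows "ip (Ltil a b p w e1) h = \<kappa> * ip e1 h"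
proof -
  have [measurable]: "h \<in> borel_measurable borel" "Ltil a b p w e1 \<in> borel_measurable borel"
    using E2_meas h Ltil_E2[OF e1_E2] by auto
  have "ip (Ltil a b p w e1) h = integral\<^sup>L lborel (\<lambda>x. \<kappa> * (e1 x * h x * (indicator S x * (p x * w x))))"
    unfolding ip_def
  proof (intro integral_cong_AE)
    show "AE x in lborel. Ltil a b p w e1 x * h x * (indicator S x * (p x * w x)) = \<kappa> * (e1 x * h x * (indicator S x * (p x * w x)))"
      using e1_eig by eventually_elim (auto simp: indicator_def)
  qed auto
  then show ?thesis unfolding ip_def by simp
qed

lemma main_lim:
  assumes g0: "g0 \<in> E2 a b p w x0" and e1n: "Nw e1 = 1" and c0: "ip g0 e1 \<noteq> 0"
  shows "(\<lambda>n. Cov (prim x0 ((Ltil a b p w ^^ n) g0)) (prim x0 ((Ltil a b p w ^^ n) g0)) / Nw ((Ltil a b p w ^^ n) g0)) \<longlonglongrightarrow> \<kappa>"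
proof -
  define f where "f n = (Ltil a b p w ^^ n) g0" for n
  have fE: "f n \<in> E2 a b p w x0" for n unfolding f_def by (rule iter_E2[OF g0])
  have fS: "f (Suc n) = Ltil a b p w (f n)" for n unfolding f_def by simp
  define N where "N n = Nw (f n)" for n
  define V where "V n = Cov (prim x0 (f n)) (prim x0 (f n))" for n
  have key: "N (Suc n) = Cov (prim x0 (f n)) (prim x0 (f (Suc n)))" for n
    unfolding N_def Nw_ip using ip_Ltil[OF fE[of n] fE[of "Suc n"]] fS[of n] by simp
  have NV: "(N (Suc n))\<^sup>2 \<le> V n * V (Suc n)" for n
    unfolding key V_def by (rule Cov_CS[OF E2D(3)[OF fE] E2D(3)[OF fE]])
  have NN: "(N (Suc n))\<^sup>2 \<le> N n * N (Suc (Suc n))" for n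
  proof -
    have "N (Suc n) = Cov (prim x0 (f (Suc n))) (prim x0 (f n))" unfolding key by (rule Cov_sym)
    also have "\<dots> = ip (f (Suc (Suc n))) (f n)"
      using ip_Ltil[OF fE[of "Suc n"] fE[of n]] fS[of "Suc n"] by simp
    finally have "(N (Suc n))\<^sup>2 = (ip (f (Suc (Suc n))) (f n))\<^sup>2" by simp
    also have "\<dots> \<le> Nw (f (Suc (Suc n))) * Nw (f n)" by (rule ip_CS[OF E2D(1)[OF fE] E2D(1)[OF fE]])
    finally show ?thesis unfolding N_def by (simp add: mult.commute)
  qed
  have V0: "0 \<le> V n" for n unfolding V_def by (rule Cov_nonneg)
  have VN: "V n \<le> \<kappa> * N n" for n unfolding V_def N_def by (rule V_le[OF fE])
  have cn: "ip (f n) e1 = \<kappa> ^ n * ip g0 e1" for n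
  proof (induction n)
    case 0 then show ?case by (simp add: f_def)
  next
    case (Suc n)
    have "ip (f (Suc n)) e1 = Cov (prim x0 (f n)) (prim x0 e1)"
      using ip_Ltil[OF fE[of n] e1_E2] fS[of n] by simp
    also have "\<dots> = Cov (prim x0 e1) (prim x0 (f n))" by (rule Cov_sym)
    also have "\<dots> = ip (Ltil a b p w e1) (f n)" using ip_Ltil[OF e1_E2 fE[of n]] by simp
    also have "\<dots> = \<kappa> * ip e1 (f n)" by (rule ip_e1[OF fE])
    also have "\<dots> = \<kappa> * ip (f n) e1" by (simp add: ip_sym)
    finally show ?case using Suc by simp
  qed
  have low: "(\<kappa> ^ n * ip g0 e1)\<^sup>2 \<le> N n" for n
  proof -
    have "(ip (f n) e1)\<^sup>2 \<le> Nw (f n) * Nw e1" by (rule ip_CS[OF E2D(1)[OF fE] E2D(1)[OF e1_E2]])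
    then show ?thesis using cn[of n] e1n unfolding N_def by simp
  qed
  have "(\<lambda>n. V n / N n) \<longlonglongrightarrow> \<kappa>"
    by (rule abstract_lim[OF kappa_nonneg c0 V0 VN NV NN low])
  then show ?thesis unfolding V_def N_def f_def .
qed

end

context setting
begin

lemma Varp_Iop:
  assumes F: "L2 a b p (prim x0 h)"
  shows "Varp a b p (Iop a b p x0 h) = Ep a b p (\<lambda>x. (prim x0 h x - Ep a b p (prim x0 h)) * (prim x0 h x - Ep a b p (prim x0 h)))"
proof -
  let ?c = "Ep a b p (prim x0 h)"
  have "Ep a b p (Iop a b p x0 h) = integral\<^sup>L lborel (\<lambda>x. prim x0 h x * (indicator S x * p x) - ?c * (indicator S x * p x))"
    unfolding Ep_eq Iop_def by (simp add: algebra_simps)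
  also have "\<dots> = ?c - ?c * 1"
    using L2p_lin_int[OF F] p_int by (simp add: Ep_eq p_one)
  finally have "Ep a b p (Iop a b p x0 h) = 0" by simp
  then show ?thesis unfolding Varp_def Iop_def by (simp add: power2_eq_square)
qed

lemma den_eq: "Ep a b p (\<lambda>x. \<bar>h x\<bar>\<^sup>2 * w x) = Nw h"
  unfolding Ep_def Nw_def set_lebesgue_integral_def
  by (intro Bochner_Integration.integral_cong) (auto simp: mult_ac)

lemma den_eq2: "Ep a b p (\<lambda>x. (h x)\<^sup>2 * w x) = Nw h"
  using den_eq[of h] by simp

lemma normsq_eq: "normsq_pw a b p w h = Nw h"
  unfolding normsq_pw_def Nw_def set_lebesgue_integral_def
  by (intro Bochner_Integration.integral_cong) (auto simp: mult_ac)

end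

context setting2
begin

lemma ip_eq: "Ep a b p (\<lambda>x. g x * h x * w x) = ip g h"
  unfolding Ep_def ip_def set_lebesgue_integral_def
  by (intro Bochner_Integration.integral_cong) (auto simp: mult_ac)

end

theorem proposition3p5:
  fixes a b :: ereal and p w e1 g0 :: "real \<Rightarrow> real" and x0 :: real
  assumes ab: "a < b"
    and x0: "x0 \<in> Ivl a b"
    and dens: "prob_density a b p"
    and wt: "weight a b p w"
    and hyp1: "H1 a b p w"
    and hyp2: "H2 a b p w"
    and cpt: "compact_Ltil a b p w x0"
    and e1_E2: "e1 \<in> E2 a b p w x0"
    and e1_eig: "AE x in lborel. x \<in> Ivl a b \<longrightarrow> Ltil a b p w e1 x = Cpw a b p w * e1 x"
    and e1_norm: "normsq_pw a b p w e1 = 1"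
    and e1_pos: "AE x in lborel. x \<in> Ivl a b \<longrightarrow> 0 < e1 x"
    and g0: "g0 \<in> E2 a b p w x0"
    and g0_e1: "Ep a b p (\<lambda>x. g0 x * e1 x * w x) \<noteq> 0"
  shows "(\<lambda>n. Varp a b p (Iop a b p x0 ((Ltil a b p w ^^ n) g0))
              / Ep a b p (\<lambda>x. \<bar>(Ltil a b p w ^^ n) g0 x\<bar>\<^sup>2 * w x))
         \<longlonglongrightarrow> Cpw a b p w"
proof -
  interpret setting2 a b p w x0 e1
    by (unfold_locales) (fact ab x0 dens wt hyp1 cpt e1_E2 e1_eig e1_pos)+
  have e1n: "Nw e1 = 1" using e1_norm normsq_eq by simp
  have c0: "ip g0 e1 \<noteq> 0" using g0_e1 ip_eq by simp
  have eq: "(\<lambda>n. Varp a b p (Iop a b p x0 ((Ltil a b p w ^^ n) g0))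
              / Ep a b p (\<lambda>x. \<bar>(Ltil a b p w ^^ n) g0 x\<bar>\<^sup>2 * w x))
     = (\<lambda>n. Cov (prim x0 ((Ltil a b p w ^^ n) g0)) (prim x0 ((Ltil a b p w ^^ n) g0)) / Nw ((Ltil a b p w ^^ n) g0))"
    by (rule ext) (simp add: Varp_Iop[OF E2D(3)[OF iter_E2[OF g0]]] den_eq2)
  show ?thesis unfolding eq by (rule main_lim[OF g0 e1n c0])
qed


end
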